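(* Let $\mathcal{G}=\langle\mathbb{V},\mathbb{E}\rangle$ and the bijection $e$ be as in the context, let $u\in\mathbb{V}$, and let $\pi$ be an $\mathcal{H}^{(\ast)}$-partition of $\mathcal{P}(\mathcal{G},e)$ in which the gadget $\mathcal{N}_u$ is not well-oriented. Then there exists an $\mathcal{H}^{(\ast)}$-partition $\pi'$ of $\mathcal{P}(\mathcal{G},e)$ such that $|\pi'|\le|\pi|$, $\mathcal{N}_u$ is well-oriented in $\pi'$, and for every $w\in\mathbb{V}$ with $w\ne u$, $\mathcal{N}_w$ is well-oriented in $\pi$ if and only if $\mathcal{N}_w$ is well-oriented in $\pi'$.
   Context: Standing assumption: $\mathcal{G}=\langle\mathbb{V},\mathbb{E}\rangle$ is a finite directed graph with $\mathbb{V}\ne\emptyset$, without self-loops, in which every vertex has in-degree $1$ or out-degree $1$; let $m=|\mathbb{E}|$ and let $e:\mathbb{E}\to\{1,\dots,m\}$ be a bijection. For $v\in\mathbb{V}$ the gadget $\mathcal{N}_v=\langle\mathcal{V}_v,\mathcal{E}_v\rangle$ has vertices $\mathcal{V}_v=\{v_{i,j}:0\le i,j\le m\}$ (distinct for distinct $v$) and arcs $\mathcal{E}_v=\{\langle v_{i,j},v_{i,j+1}\rangle:0\le i\le m,0\le j<m\}\cup\{\langle v_{i,j},v_{i+1,j}\rangle:0\le i<m,0\le j\le m\}$. Let $\mathcal{L}_v=\{\{v_{i,0},\dots,v_{i,m}\}:0\le i\le m\}$ and $\mathcal{R}_v=\{\{v_{0,i},\dots,v_{m,i}\}:0\le i\le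 m\}$. The digraph $\mathcal{P}(\mathcal{G},e)$ has vertex set $\bigcup_{v\in\mathbb{V}}\mathcal{V}_v\cup\mathbb{E}$ (each arc of $\mathcal{G}$ is also a vertex) and arc set $\bigcup_{v\in\mathbb{V}}\mathcal{E}_v\cup\{\langle\langle v,u\rangle,v_{e(\langle v,u\rangle),0}\rangle:\langle v,u\rangle\in\mathbb{E}\}\cup\{\langle\langle v,u\rangle,u_{0,e(\langle v,u\rangle)}\rangle:\langle v,u\rangle\in\mathbb{E}\}$; it is a DAG. For a DAG $G$, a partition $\pi$ of its vertex set is an $\mathcal{H}^{(\ast)}$-partition if every induced subgraph $G[P]$, $P\in\pi$, has a directed Hamiltonian path and the quotient digraph $G/\pi$ (vertex set $\pi$, arc $\langle P,Q\rangle$ for $P\ne Q$ whenever some arc of $G$ goes from $P$ to $Q$) is acyclic. For an $\mathcal{H}^{(\ast)}$-partition $\pi$ of $\mathcal{P}(\mathcal{G},e)$ and $v\in\mathbb{V}$, let $\pi|_{\mathcal{N}_v}=\{P\cap\mathcal{V}_v:P\in\pi,\ P\cap\mathcal{V}_v\ne\emptyset\}$; the gadget $\mathcal{N}_v$ is well-oriented in $\pi$ if $\pi|_{\mathcal{N}_v}=\mathcal{L}_v$ or $\pi|_{\mathcal{N}_v}=\mathcal{R}_v$. *)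

theory Defs
  imports Main "HOL-Library.Disjoint_Sets"
begin

text \<open>Vertices of the digraph P(G,e): gadget vertices v_{i,j} and arcs of G.\<close>
datatype 'v pvert = Gad 'v nat nat | ArcV "'v \<times> 'v"

definition has_ham_path :: "('a \<times> 'a) set \<Rightarrow> 'a set \<Rightarrow> bool" where
  "has_ham_path A S \<longleftrightarrow> (\<exists>xs. distinct xs \<and> set xs = S \<and>
      (\<forall>k. Suc k < length xs \<longrightarrow> (xs ! k, xs ! Suc k) \<in> A))"

definition quotient_arcs :: "('a \<times> 'a) set \<Rightarrow> 'a set set \<Rightarrow> ('a set \<times> 'a set) set" where
  "quotient_arcs A \<pi> = {(P, Q). P \<in> \<pi> \<and> Q \<in> \<pi> \<and> P \<noteq> Q \<and> (\<exists>x\<in>P. \<exists>y\<in>Q. (x, y) \<in> A)}"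

definition H_star_partition :: "'a set \<Rightarrow> ('a \<times> 'a) set \<Rightarrow> 'a set set \<Rightarrow> bool" where
  "H_star_partition Vs A \<pi> \<longleftrightarrow> partition_on Vs \<pi> \<and> (\<forall>P\<in>\<pi>. has_ham_path A P)
      \<and> acyclic (quotient_arcs A \<pi>)"

definition gadV :: "nat \<Rightarrow> 'v \<Rightarrow> 'v pvert set" where
  "gadV m v = {Gad v i j | i j. i \<le> m \<and> j \<le> m}"

definition gadE :: "nat \<Rightarrow> 'v \<Rightarrow> ('v pvert \<times> 'v pvert) set" where
  "gadE m v = {(Gad v i j, Gad v i (Suc j)) | i j. i \<le> m \<and> j < m}
            \<union> {(Gad v i j, Gad v (Suc i) j) | i j. i < m \<and> j \<le> m}"

definition gadL :: "nat \<Rightarrow> 'v \<Rightarrow> 'v pvert set set" where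
  "gadL m v = {{Gad v i j | j. j \<le> m} | i. i \<le> m}"

definition gadR :: "nat \<Rightarrow> 'v \<Rightarrow> 'v pvert set set" where
  "gadR m v = {{Gad v j i | j. j \<le> m} | i. i \<le> m}"

definition PV :: "'v set \<Rightarrow> ('v \<times> 'v) set \<Rightarrow> 'v pvert set" where
  "PV V E = (\<Union>v\<in>V. gadV (card E) v) \<union> ArcV ` E"

definition PA :: "'v set \<Rightarrow> ('v \<times> 'v) set \<Rightarrow> (('v \<times> 'v) \<Rightarrow> nat) \<Rightarrow> ('v pvert \<times> 'v pvert) set" where
  "PA V E e = (\<Union>v\<in>V. gadE (card E) v)
      \<union> {(ArcV (v, u), Gad v (e (v, u)) 0) | v u. (v, u) \<in> E}
      \<union> {(ArcV (v, u), Gad u 0 (e (v, u))) | v u. (v, u) \<in> E}"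

definition restr_gad :: "nat \<Rightarrow> 'v pvert set set \<Rightarrow> 'v \<Rightarrow> 'v pvert set set" where
  "restr_gad m \<pi> v = {P \<inter> gadV m v | P. P \<in> \<pi> \<and> P \<inter> gadV m v \<noteq> {}}"

definition well_oriented :: "nat \<Rightarrow> 'v pvert set set \<Rightarrow> 'v \<Rightarrow> bool" where
  "well_oriented m \<pi> v \<longleftrightarrow> restr_gad m \<pi> v = gadL m v \<or> restr_gad m \<pi> v = gadR m v"

definition std_graph :: "'v set \<Rightarrow> ('v \<times> 'v) set \<Rightarrow> (('v \<times> 'v) \<Rightarrow> nat) \<Rightarrow> bool" where
  "std_graph V E e \<longleftrightarrow> finite V \<and> V \<noteq> {} \<and> E \<subseteq> V \<times> V \<and> (\<forall>v. (v, v) \<notin> E)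
     \<and> (\<forall>v\<in>V. card {w. (w, v) \<in> E} = 1 \<or> card {w. (v, w) \<in> E} = 1)
     \<and> bij_betw e E {1..card E}"

end

theory Submission
  imports Defs
begin


lemma acyclic_map:
  assumes "\<And>x y. (x,y) \<in> R \<Longrightarrow> (f x, f y) \<in> S" and "acyclic S"
  shows "acyclic R"
proof -
  have "(x,y) \<in> R\<^sup>+ \<Longrightarrow> (f x, f y) \<in> S\<^sup>+" for x y
    by (induction rule: trancl_induct) (auto intro: assms(1) trancl_into_trancl)
  then show ?thesis using assms(2) unfolding acyclic_def by blast
qed

lemma acyclic_rank:
  fixes rk :: "'a \<Rightarrow> nat"
  assumes "\<And>x y. (x,y) \<in> R \<Longrightarrow> rk x < rk y \<or> (rk x = rk y \<and> (x,y) \<in> S)" and "acyclic S"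
  shows "acyclic R"
proof -
  have "(x,y) \<in> R\<^sup>+ \<Longrightarrow> rk x < rk y \<or> (rk x = rk y \<and> (x,y) \<in> S\<^sup>+)" for x y
  proof (induction rule: trancl_induct)
    case (base y) then show ?case using assms(1) by blast
  next
    case (step y z) then show ?case using assms(1)[of y z]
      by (auto intro: trancl_into_trancl)
  qed
  then show ?thesis using assms(2) unfolding acyclic_def by blast
qed

lemma part_unique: "partition_on B \<sigma> \<Longrightarrow> P\<in>\<sigma> \<Longrightarrow> Q\<in>\<sigma> \<Longrightarrow> x\<in>P \<Longrightarrow> x\<in>Q \<Longrightarrow> P = Q"
  using partition_onD2 disjointD by fastforce


lemma ham_single: "has_ham_path A {x}"
  unfolding has_ham_path_def by (rule exI[of _ "[x]"]) auto

lemma construct: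
  fixes W :: "nat \<Rightarrow> 'a set"
  assumes Hp: "H_star_partition Vs A \<pi>" and fin: "finite \<pi>"
    and XV: "X \<subseteq> Vs"
    and Xeq: "X = insert s (\<Union>i\<le>n. W i)"
    and sW: "\<forall>i\<le>n. s \<notin> W i" and Wne: "\<forall>i\<le>n. W i \<noteq> {}"
    and Wdisj: "\<forall>i\<le>n. \<forall>j\<le>n. i \<noteq> j \<longrightarrow> W i \<inter> W j = {}"
    and Wham: "\<forall>i\<le>n. has_ham_path A (W i)"
    and nos: "\<forall>x. (x, s) \<notin> A"
    and inW: "\<forall>i\<le>n. \<forall>x y. (x,y)\<in>A \<longrightarrow> y \<in> W i \<longrightarrow> x \<notin> W i \<longrightarrow> x = s \<or> (\<exists>j<i. x \<in> W j)"
    and PX: "\<forall>P\<in>\<pi>. P - X \<noteq> {} \<longrightarrow> has_ham_path A (P - X)"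
    and cnt: "n + 2 \<le> card {P\<in>\<pi>. P \<subseteq> X}"
  shows "H_star_partition Vs A ({P - X | P. P\<in>\<pi> \<and> P - X \<noteq> {}} \<union> W ` {..n} \<union> {{s}})
     \<and> card ({P - X | P. P\<in>\<pi> \<and> P - X \<noteq> {}} \<union> W ` {..n} \<union> {{s}}) \<le> card \<pi>"
proof -
  define C3 where "C3 = {P - X | P. P\<in>\<pi> \<and> P - X \<noteq> {}}"
  define \<pi>' where "\<pi>' = C3 \<union> W ` {..n} \<union> {{s}}"
  have part: "partition_on Vs \<pi>" and hams: "\<forall>P\<in>\<pi>. has_ham_path A P"
    and acy: "acyclic (quotient_arcs A \<pi>)"
    using Hp unfolding H_star_partition_def by auto
  have UV: "\<Union>\<pi> = Vs" using part partition_onD1 by blast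
  have dj: "\<And>P Q. P\<in>\<pi> \<Longrightarrow> Q\<in>\<pi> \<Longrightarrow> P \<noteq> Q \<Longrightarrow> P \<inter> Q = {}"
    using part unfolding partition_on_def disjoint_def by blast
  have sX: "s \<in> X" using Xeq by blast
  have WX: "\<And>i. i \<le> n \<Longrightarrow> W i \<subseteq> X" using Xeq by blast
  have Winj: "\<And>i j. i \<le> n \<Longrightarrow> j \<le> n \<Longrightarrow> W i = W j \<Longrightarrow> i = j"
    using Wdisj Wne by blast
  have C3X: "\<And>Q. Q \<in> C3 \<Longrightarrow> Q \<inter> X = {} \<and> Q \<noteq> {}" unfolding C3_def by blast
  have p1: "\<Union>\<pi>' = Vs"
  proof -
    have "\<Union>C3 = Vs - X" unfolding C3_def using UV by blast
    moreover have "\<Union>(W ` {..n}) \<union> {s} = X" using Xeq by blast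
    ultimately show ?thesis unfolding \<pi>'_def using XV by blast
  qed
  have p2: "\<And>P Q. P\<in>\<pi>' \<Longrightarrow> Q\<in>\<pi>' \<Longrightarrow> P \<noteq> Q \<Longrightarrow> P \<inter> Q = {}"
  proof -
    fix P Q assume P: "P\<in>\<pi>'" and Q: "Q\<in>\<pi>'" and ne: "P \<noteq> Q"
    show "P \<inter> Q = {}"
    proof (cases "P \<in> C3")
      case True
      then obtain P0 where P0: "P0 \<in> \<pi>" "P = P0 - X" unfolding C3_def by blast
      show ?thesis
      proof (cases "Q \<in> C3")
        case True
        then obtain Q0 where Q0: "Q0 \<in> \<pi>" "Q = Q0 - X" unfolding C3_def by blast
        then show ?thesis using P0 ne dj[of P0 Q0] by blast
      next
        case False then have "Q \<subseteq> X" using Q WX sX unfolding \<pi>'_def by blast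
        then show ?thesis using P0 by blast
      qed
    next
      case False then have PX': "P \<subseteq> X" using P WX sX unfolding \<pi>'_def by blast
      show ?thesis
      proof (cases "Q \<in> C3")
        case True
        then show ?thesis using PX' C3X by blast
      next
        case False
        then have Q': "Q \<in> W ` {..n} \<union> {{s}}" using Q unfolding \<pi>'_def by blast
        have P': "P \<in> W ` {..n} \<union> {{s}}" using P \<open>P \<notin> C3\<close> unfolding \<pi>'_def by blast
        show ?thesis using P' Q' ne sW Wdisj by fastforce
      qed
    qed
  qed
  have p3: "{} \<notin> \<pi>'" unfolding \<pi>'_def C3_def using Wne by blast
  have partn: "partition_on Vs \<pi>'"
    by (rule partition_onI[OF p1 _ p3]) (unfold disjnt_def, rule p2)
  have hams': "\<forall>P\<in>\<pi>'. has_ham_path A P"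
  proof
    fix P assume "P \<in> \<pi>'"
    then consider (a) "P \<in> C3" | (b) "P \<in> W ` {..n}" | (c) "P = {s}" unfolding \<pi>'_def by blast
    then show "has_ham_path A P"
    proof cases
      case a
      then obtain P0 where "P0 \<in> \<pi>" "P = P0 - X" "P0 - X \<noteq> {}" unfolding C3_def by blast
      then show ?thesis using PX by blast
    next
      case b then show ?thesis using Wham by blast
    next
      case c then show ?thesis using ham_single by simp
    qed
  qed
  define g where "g Q = (SOME P. P \<in> \<pi> \<and> Q = P - X)" for Q
  have g: "\<And>Q. Q \<in> C3 \<Longrightarrow> g Q \<in> \<pi> \<and> Q = g Q - X"
  proof -
    fix Q assume "Q \<in> C3"
    then have "\<exists>P. P \<in> \<pi> \<and> Q = P - X" unfolding C3_def by blast
    then show "g Q \<in> \<pi> \<and> Q = g Q - X" unfolding g_def by (rule someI_ex)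
  qed
  define S where "S = {(Q1,Q2). Q1 \<in> C3 \<and> Q2 \<in> C3 \<and> (g Q1, g Q2) \<in> quotient_arcs A \<pi>}"
  have acyS: "acyclic S"
    by (rule acyclic_map[OF _ acy, of _ g]) (auto simp: S_def)
  define rk where "rk Q = (if Q = {s} then 0 else if (\<exists>i\<le>n. Q = W i) then Suc (THE i. i \<le> n \<and> Q = W i) else n+2)" for Q
  have rkW: "\<And>i. i \<le> n \<Longrightarrow> rk (W i) = Suc i"
  proof -
    fix i assume i: "i \<le> n"
    have "W i \<noteq> {s}" using sW i by auto
    moreover have "(THE j. j \<le> n \<and> W i = W j) = i"
      using Winj i by (intro the_equality) auto
    ultimately show "rk (W i) = Suc i" unfolding rk_def using i by auto
  qed
  have rkC: "\<And>Q. Q \<in> C3 \<Longrightarrow> rk Q = n + 2"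
  proof -
    fix Q assume Q: "Q \<in> C3"
    then have "Q \<noteq> {s}" using C3X sX by blast
    moreover have "\<not>(\<exists>i\<le>n. Q = W i)" using C3X[OF Q] WX Wne by blast
    ultimately show "rk Q = n+2" unfolding rk_def by auto
  qed
  have arcs: "rk Q1 < rk Q2 \<or> (rk Q1 = rk Q2 \<and> (Q1,Q2) \<in> S)"
    if a: "(Q1,Q2) \<in> quotient_arcs A \<pi>'" for Q1 Q2
  proof -
    from a obtain x y where Q1: "Q1 \<in> \<pi>'" and Q2: "Q2 \<in> \<pi>'" and ne: "Q1 \<noteq> Q2"
      and x: "x \<in> Q1" and y: "y \<in> Q2" and xy: "(x,y) \<in> A"
      unfolding quotient_arcs_def by blast
    have uniq: "\<And>R. R \<in> \<pi>' \<Longrightarrow> x \<in> R \<Longrightarrow> R = Q1" using p2 Q1 x by blast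
    have "Q2 \<noteq> {s}" using y xy nos by auto
    show ?thesis
    proof (cases "Q2 \<in> C3")
      case True
      note rk2 = rkC[OF True]
      show ?thesis
      proof (cases "Q1 \<in> C3")
        case True
        have "g Q1 \<noteq> g Q2" using g[OF True] g[OF \<open>Q2 \<in> C3\<close>] ne by metis
        then have "(g Q1, g Q2) \<in> quotient_arcs A \<pi>"
          unfolding quotient_arcs_def using g[OF True] g[OF \<open>Q2 \<in> C3\<close>] x y xy by blast
        then show ?thesis using True \<open>Q2 \<in> C3\<close> rkC[OF True] rk2 by (auto simp: S_def)
      next
        case False
        then have "Q1 = {s} \<or> (\<exists>i\<le>n. Q1 = W i)" using Q1 unfolding \<pi>'_def by blast
        then show ?thesis
        proof
          assume "Q1 = {s}" then show ?thesis using rk2 by (simp add: rk_def)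
        next
          assume "\<exists>i\<le>n. Q1 = W i" then obtain i where "i \<le> n" "Q1 = W i" by blast
          then show ?thesis using rk2 rkW by simp
        qed
      qed
    next
      case False
      then obtain i where i: "i \<le> n" "Q2 = W i" using Q2 \<open>Q2 \<noteq> {s}\<close> unfolding \<pi>'_def by blast
      have "x \<notin> W i" using p2[OF Q1 Q2 ne] x i by blast
      then have "x = s \<or> (\<exists>j<i. x \<in> W j)" using inW i y xy by blast
      then show ?thesis
      proof
        assume "x = s"
        then have "Q1 = {s}" using uniq[of "{s}"] unfolding \<pi>'_def by blast
        then show ?thesis using rkW i by (simp add: rk_def)
      next
        assume "\<exists>j<i. x \<in> W j"
        then obtain j where j: "j < i" "x \<in> W j" by blast
        then have "Q1 = W j" using uniq[of "W j"] i unfolding \<pi>'_def by auto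
        then show ?thesis using rkW j i by simp
      qed
    qed
  qed
  have acy': "acyclic (quotient_arcs A \<pi>')"
    by (rule acyclic_rank[OF _ acyS, of _ rk]) (use arcs in blast)
  have finC3: "finite C3" unfolding C3_def using fin by simp
  have "card \<pi>' \<le> card C3 + card (W ` {..n}) + card {{s}}"
    unfolding \<pi>'_def by (meson card_Un_le le_trans add_le_mono order_refl)
  also have "card (W ` {..n}) \<le> n + 1" using card_image_le[of "{..n}" W] by simp
  also have "C3 = (\<lambda>P. P - X) ` {P\<in>\<pi>. \<not> P \<subseteq> X}" unfolding C3_def by blast
  also have "card \<dots> \<le> card {P\<in>\<pi>. \<not> P \<subseteq> X}" using fin by (intro card_image_le) simp
  finally have c1: "card \<pi>' \<le> card {P\<in>\<pi>. \<not> P \<subseteq> X} + (n + 2)" by simp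
  have "card \<pi> = card {P\<in>\<pi>. P \<subseteq> X} + card {P\<in>\<pi>. \<not> P \<subseteq> X}"
    using fin by (subst card_Un_disjoint[symmetric]) (auto intro: arg_cong[where f=card])
  then have "card \<pi>' \<le> card \<pi>" using c1 cnt by linarith
  then show ?thesis using partn hams' acy' unfolding H_star_partition_def \<pi>'_def C3_def by blast
qed


fun gi :: "'v pvert \<Rightarrow> nat" where "gi (Gad v i j) = i" | "gi (ArcV a) = 0"
fun gj :: "'v pvert \<Rightarrow> nat" where "gj (Gad v i j) = j" | "gj (ArcV a) = 0"
definition lv :: "'v pvert \<Rightarrow> nat" where "lv x = gi x + gj x"

lemma gadE_step:
  assumes "(x,y) \<in> gadE m u"
  shows "\<exists>i j. x = Gad u i j \<and> i \<le> m \<and> j \<le> m \<and> (y = Gad u i (Suc j) \<and> j < m \<or> y = Gad u (Suc i) j \<and> i < m)"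
  using assms unfolding gadE_def by auto

lemma gadE_lv: "(x,y) \<in> gadE m u \<Longrightarrow> lv y = Suc (lv x) \<and> gi x \<le> gi y \<and> gj x \<le> gj y"
  by (drule gadE_step) (auto simp: lv_def)

lemma gadE_right: "i \<le> m \<Longrightarrow> j < m \<Longrightarrow> (Gad u i j, Gad u i (Suc j)) \<in> gadE m u"
  unfolding gadE_def by auto
lemma gadE_down: "i < m \<Longrightarrow> j \<le> m \<Longrightarrow> (Gad u i j, Gad u (Suc i) j) \<in> gadE m u"
  unfolding gadE_def by auto

lemma gadV_iff: "x \<in> gadV m u \<longleftrightarrow> (\<exists>i j. x = Gad u i j \<and> i \<le> m \<and> j \<le> m)"
  unfolding gadV_def by auto

lemma finite_gadV: "finite (gadV m u)"
proof -
  have "gadV m u = (\<lambda>(i,j). Gad u i j) ` ({..m} \<times> {..m})" unfolding gadV_def by auto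
  then show ?thesis by simp
qed

lemma path_facts:
  assumes d: "distinct xs" and sub: "set xs \<subseteq> gadV m u"
    and ar: "\<forall>k. Suc k < length xs \<longrightarrow> (xs ! k, xs ! Suc k) \<in> A"
    and AE: "\<forall>x\<in>gadV m u. \<forall>y\<in>gadV m u. (x,y) \<in> A \<longleftrightarrow> (x,y) \<in> gadE m u"
  shows "\<forall>a b. a \<le> b \<longrightarrow> b < length xs \<longrightarrow> lv (xs!b) = lv (xs!a) + (b - a)
     \<and> gi (xs!a) \<le> gi (xs!b) \<and> gj (xs!a) \<le> gj (xs!b)"
proof (intro allI impI)
  fix a b assume ab: "a \<le> b" "b < length xs"
  have st: "\<And>k. Suc k < length xs \<Longrightarrow> (xs!k, xs!Suc k) \<in> gadE m u"
  proof -
    fix k assume k: "Suc k < length xs"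
    have "xs!k \<in> gadV m u" "xs!Suc k \<in> gadV m u" using sub k nth_mem[of k xs] nth_mem[of "Suc k" xs] by auto
    then show "(xs!k, xs!Suc k) \<in> gadE m u" using ar AE k by blast
  qed
  show "lv (xs!b) = lv (xs!a) + (b - a) \<and> gi (xs!a) \<le> gi (xs!b) \<and> gj (xs!a) \<le> gj (xs!b)"
    using ab
  proof (induction b)
    case 0 then show ?case by simp
  next
    case (Suc b)
    show ?case
    proof (cases "a = Suc b")
      case True then show ?thesis by simp
    next
      case False
      then have "a \<le> b" using Suc by simp
      then have IH: "lv (xs!b) = lv (xs!a) + (b - a) \<and> gi (xs!a) \<le> gi (xs!b) \<and> gj (xs!a) \<le> gj (xs!b)"
        using Suc by simp
      have "lv (xs!Suc b) = Suc (lv (xs!b)) \<and> gi (xs!b) \<le> gi (xs!Suc b) \<and> gj (xs!b) \<le> gj (xs!Suc b)"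
        using gadE_lv[OF st[of b]] Suc.prems(2) by simp
      then show ?thesis using IH \<open>a \<le> b\<close> by auto
    qed
  qed
qed


locale gp =
  fixes m :: nat and u :: 'v and \<sigma> :: "'v pvert set set" and A :: "('v pvert \<times> 'v pvert) set"
  assumes part: "partition_on (gadV m u) \<sigma>"
    and ham: "\<forall>P\<in>\<sigma>. has_ham_path A P"
    and acy: "acyclic (quotient_arcs A \<sigma>)"
    and AE: "\<forall>x\<in>gadV m u. \<forall>y\<in>gadV m u. (x,y) \<in> A \<longleftrightarrow> (x,y) \<in> gadE m u"
    and cardle: "card \<sigma> \<le> Suc m"
begin

lemma sub: "P \<in> \<sigma> \<Longrightarrow> P \<subseteq> gadV m u"
  using part unfolding partition_on_def by blast

lemma L_all:
  assumes P: "P \<in> \<sigma>" and x: "x \<in> P" and y: "y \<in> P" and le: "lv x \<le> lv y"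
  shows "gi x \<le> gi y \<and> gj x \<le> gj y \<and> (lv y = Suc (lv x) \<longrightarrow> (x,y) \<in> gadE m u) \<and> (lv x = lv y \<longrightarrow> x = y)"
proof -
  obtain xs where d: "distinct xs" and s: "set xs = P"
    and ar: "\<forall>k. Suc k < length xs \<longrightarrow> (xs ! k, xs ! Suc k) \<in> A"
    using ham P unfolding has_ham_path_def by blast
  have "set xs \<subseteq> gadV m u" using s sub[OF P] by simp
  note pf = path_facts[OF d this ar AE]
  obtain a where a: "a < length xs" "x = xs!a" using x s by (metis in_set_conv_nth)
  obtain b where b: "b < length xs" "y = xs!b" using y s by (metis in_set_conv_nth)
  have ab: "a \<le> b"
  proof (rule ccontr)
    assume "\<not> a \<le> b"
    then have "lv x = lv y + (a - b)" using pf a b by simp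
    then show False using le \<open>\<not> a \<le> b\<close> by simp
  qed
  have f: "lv y = lv x + (b - a) \<and> gi x \<le> gi y \<and> gj x \<le> gj y" using pf a b ab by simp
  have h1: "lv y = Suc (lv x) \<Longrightarrow> (x,y) \<in> gadE m u"
  proof -
    assume "lv y = Suc (lv x)"
    then have "b = Suc a" using f ab by simp
    then have "(x,y) \<in> A" using ar a b by simp
    moreover have "x \<in> gadV m u" "y \<in> gadV m u" using x y sub[OF P] by auto
    ultimately show ?thesis using AE by blast
  qed
  have h2: "lv x = lv y \<Longrightarrow> x = y"
  proof -
    assume "lv x = lv y" then have "a = b" using f ab by simp
    then show ?thesis using a b by simp
  qed
  show ?thesis
  proof (intro conjI impI)
    show "gi x \<le> gi y" using f by (rule conjunct1[OF conjunct2])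
    show "gj x \<le> gj y" using f by (rule conjunct2[OF conjunct2])
  qed (fact h1, fact h2)
qed

definition pt :: "'v pvert \<Rightarrow> 'v pvert set" where
  "pt x = (THE P. P \<in> \<sigma> \<and> x \<in> P)"

lemma pt_uniq: "P \<in> \<sigma> \<Longrightarrow> x \<in> P \<Longrightarrow> pt x = P"
  unfolding pt_def
proof (rule the_equality)
  show "P \<in> \<sigma> \<Longrightarrow> x \<in> P \<Longrightarrow> P \<in> \<sigma> \<and> x \<in> P" by simp
  fix Q assume "P \<in> \<sigma>" "x \<in> P" "Q \<in> \<sigma> \<and> x \<in> Q"
  then show "Q = P" using part_unique[OF part] by blast
qed

lemma pt_ex: "x \<in> gadV m u \<Longrightarrow> pt x \<in> \<sigma> \<and> x \<in> pt x"
proof -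
  assume "x \<in> gadV m u"
  then obtain P where "P \<in> \<sigma>" "x \<in> P" using part unfolding partition_on_def by blast
  then show ?thesis using pt_uniq by simp
qed

definition Pk :: "nat \<Rightarrow> 'v pvert set" where "Pk k = pt (Gad u k (m - k))"

lemma Pk: "k \<le> m \<Longrightarrow> Pk k \<in> \<sigma> \<and> Gad u k (m - k) \<in> Pk k"
  unfolding Pk_def by (rule pt_ex) (auto simp: gadV_def)

lemma Pk_inj: "k \<le> m \<Longrightarrow> k' \<le> m \<Longrightarrow> Pk k = Pk k' \<Longrightarrow> k = k'"
proof -
  assume k: "k \<le> m" "k' \<le> m" "Pk k = Pk k'"
  have "Gad u k (m - k) = Gad u k' (m - k')"
    using L_all[of "Pk k" "Gad u k (m - k)" "Gad u k' (m - k')"] Pk[of k] Pk[of k'] k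
    by (auto simp: lv_def)
  then show "k = k'" by simp
qed

lemma fin_sigma: "finite \<sigma>"
  using finite_elements[OF finite_gadV part] .

lemma sigma_eq: "\<sigma> = Pk ` {..m}"
proof -
  have s1: "Pk ` {..m} \<subseteq> \<sigma>" using Pk by auto
  have "inj_on Pk {..m}" using Pk_inj by (auto simp: inj_on_def)
  then have "card (Pk ` {..m}) = Suc m" by (simp add: card_image)
  then show ?thesis using card_subset_eq[OF fin_sigma s1] cardle card_mono[OF fin_sigma s1] by simp
qed

lemma in_some: "x \<in> gadV m u \<Longrightarrow> \<exists>l\<le>m. x \<in> Pk l"
proof -
  assume "x \<in> gadV m u"
  then have "pt x \<in> Pk ` {..m}" "x \<in> pt x" using pt_ex sigma_eq by auto
  then show ?thesis by auto
qed

lemma qa: "P\<in>\<sigma> \<Longrightarrow> Q\<in>\<sigma> \<Longrightarrow> P\<noteq>Q \<Longrightarrow> x\<in>P \<Longrightarrow> y\<in>Q \<Longrightarrow> (x,y)\<in>gadE m u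
   \<Longrightarrow> (P,Q) \<in> quotient_arcs A \<sigma>"
proof -
  assume a: "P\<in>\<sigma>" "Q\<in>\<sigma>" "P\<noteq>Q" "x\<in>P" "y\<in>Q" "(x,y)\<in>gadE m u"
  have "x \<in> gadV m u" "y \<in> gadV m u" using a sub by auto
  then have "(x,y) \<in> A" using AE a(6) by blast
  then show ?thesis unfolding quotient_arcs_def using a by auto
qed

lemma no2: "(P,Q) \<in> quotient_arcs A \<sigma> \<Longrightarrow> (Q,P) \<notin> quotient_arcs A \<sigma>"
proof
  assume "(P,Q) \<in> quotient_arcs A \<sigma>" "(Q,P) \<in> quotient_arcs A \<sigma>"
  then have "(P,P) \<in> (quotient_arcs A \<sigma>)\<^sup>+" by (meson r_into_trancl trancl_trans)
  then show False using acy unfolding acyclic_def by blast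
qed

end


context gp begin

definition ak :: "nat \<Rightarrow> 'v pvert" where "ak k = Gad u k (m - Suc k)"
definition dk :: "nat \<Rightarrow> 'v pvert" where "dk k = Gad u (Suc k) (m - k)"

lemma a_part:
  assumes k: "k < m"
  shows "pt (ak k) = Pk k \<or> pt (ak k) = Pk (Suc k)"
proof -
  have av: "ak k \<in> gadV m u" unfolding ak_def gadV_def using k by auto
  obtain l where l: "l \<le> m" "ak k \<in> Pk l" using in_some[OF av] by blast
  have bl: "Pk l \<in> \<sigma>" "Gad u l (m - l) \<in> Pk l" using Pk[OF l(1)] by auto
  have "lv (Gad u l (m - l)) = Suc (lv (ak k))" using l k by (simp add: lv_def ak_def)
  then have "(ak k, Gad u l (m - l)) \<in> gadE m u" using L_all[OF bl(1) l(2) bl(2)] by simp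
  from gadE_step[OF this] have "l = k \<or> l = Suc k" using k by (auto simp: ak_def)
  moreover have "pt (ak k) = Pk l" using pt_uniq bl l by blast
  ultimately show ?thesis by blast
qed

lemma d_part:
  assumes k: "k < m"
  shows "pt (dk k) = Pk k \<or> pt (dk k) = Pk (Suc k)"
proof -
  have av: "dk k \<in> gadV m u" unfolding dk_def gadV_def using k by auto
  obtain l where l: "l \<le> m" "dk k \<in> Pk l" using in_some[OF av] by blast
  have bl: "Pk l \<in> \<sigma>" "Gad u l (m - l) \<in> Pk l" using Pk[OF l(1)] by auto
  have "lv (dk k) = Suc (lv (Gad u l (m - l)))" using l k by (simp add: lv_def dk_def)
  then have "(Gad u l (m - l), dk k) \<in> gadE m u" using L_all[OF bl(1) bl(2) l(2)] by simp
  from gadE_step[OF this] have "l = k \<or> l = Suc k" using k l by (auto simp: dk_def)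
  moreover have "pt (dk k) = Pk l" using pt_uniq bl l by blast
  ultimately show ?thesis by blast
qed

lemma Pk_ne: "k < m \<Longrightarrow> Pk k \<noteq> Pk (Suc k)"
proof
  assume "k < m" "Pk k = Pk (Suc k)"
  then have "k = Suc k" using Pk_inj[of k "Suc k"] by simp
  then show False by simp
qed

lemma arc_fwd1: "k < m \<Longrightarrow> pt (ak k) = Pk k \<Longrightarrow> (Pk k, Pk (Suc k)) \<in> quotient_arcs A \<sigma>"
proof -
  assume k: "k < m" and F: "pt (ak k) = Pk k"
  have av: "ak k \<in> gadV m u" unfolding ak_def gadV_def using k by auto
  have x: "ak k \<in> Pk k" using pt_ex[OF av] F by simp
  have y: "Gad u (Suc k) (m - Suc k) \<in> Pk (Suc k)" using Pk[of "Suc k"] k by simp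
  have "(ak k, Gad u (Suc k) (m - Suc k)) \<in> gadE m u" unfolding ak_def using k by (intro gadE_down) auto
  then show ?thesis using qa[OF _ _ Pk_ne[OF k] x y] Pk k by simp
qed

lemma arc_bwd1: "k < m \<Longrightarrow> pt (ak k) = Pk (Suc k) \<Longrightarrow> (Pk (Suc k), Pk k) \<in> quotient_arcs A \<sigma>"
proof -
  assume k: "k < m" and F: "pt (ak k) = Pk (Suc k)"
  have av: "ak k \<in> gadV m u" unfolding ak_def gadV_def using k by auto
  have x: "ak k \<in> Pk (Suc k)" using pt_ex[OF av] F by simp
  have y: "Gad u k (m - k) \<in> Pk k" using Pk[of k] k by simp
  have "(Gad u k (m - Suc k), Gad u k (Suc (m - Suc k))) \<in> gadE m u" using k by (intro gadE_right) auto
  moreover have "Suc (m - Suc k) = m - k" using k by simp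
  ultimately have "(ak k, Gad u k (m - k)) \<in> gadE m u" unfolding ak_def by simp
  then show ?thesis using qa[OF _ _ Pk_ne[OF k, symmetric] x y] Pk k by simp
qed

lemma arc_fwd2: "k < m \<Longrightarrow> pt (dk k) = Pk (Suc k) \<Longrightarrow> (Pk k, Pk (Suc k)) \<in> quotient_arcs A \<sigma>"
proof -
  assume k: "k < m" and F: "pt (dk k) = Pk (Suc k)"
  have av: "dk k \<in> gadV m u" unfolding dk_def gadV_def using k by auto
  have y: "dk k \<in> Pk (Suc k)" using pt_ex[OF av] F by simp
  have x: "Gad u k (m - k) \<in> Pk k" using Pk[of k] k by simp
  have "(Gad u k (m - k), dk k) \<in> gadE m u" unfolding dk_def using k by (intro gadE_down) auto
  then show ?thesis using qa[OF _ _ Pk_ne[OF k] x y] Pk k by simp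
qed

lemma arc_bwd2: "k < m \<Longrightarrow> pt (dk k) = Pk k \<Longrightarrow> (Pk (Suc k), Pk k) \<in> quotient_arcs A \<sigma>"
proof -
  assume k: "k < m" and F: "pt (dk k) = Pk k"
  have av: "dk k \<in> gadV m u" unfolding dk_def gadV_def using k by auto
  have y: "dk k \<in> Pk k" using pt_ex[OF av] F by simp
  have x: "Gad u (Suc k) (m - Suc k) \<in> Pk (Suc k)" using Pk[of "Suc k"] k by simp
  have "(Gad u (Suc k) (m - Suc k), Gad u (Suc k) (Suc (m - Suc k))) \<in> gadE m u" using k by (intro gadE_right) auto
  moreover have "Suc (m - Suc k) = m - k" using k by simp
  ultimately have "(Gad u (Suc k) (m - Suc k), dk k) \<in> gadE m u" unfolding dk_def by simp
  then show ?thesis using qa[OF _ _ Pk_ne[OF k, symmetric] x y] Pk k by simp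
qed

lemma F_d: "k < m \<Longrightarrow> pt (ak k) = Pk k \<Longrightarrow> pt (dk k) = Pk (Suc k)"
  using arc_fwd1 arc_bwd2 d_part no2 by blast

lemma nF_d: "k < m \<Longrightarrow> pt (ak k) \<noteq> Pk k \<Longrightarrow> pt (dk k) = Pk k"
proof -
  assume k: "k < m" and n: "pt (ak k) \<noteq> Pk k"
  then have "pt (ak k) = Pk (Suc k)" using a_part by blast
  then have "(Pk (Suc k), Pk k) \<in> quotient_arcs A \<sigma>" using arc_bwd1 k by blast
  then show ?thesis using arc_fwd2 d_part no2 k by blast
qed

lemma F_prop: "Suc k < m \<Longrightarrow> pt (ak k) = Pk k \<Longrightarrow> pt (ak (Suc k)) = Pk (Suc k)"
proof (rule ccontr)
  assume k: "Suc k < m" and F: "pt (ak k) = Pk k" and n: "pt (ak (Suc k)) \<noteq> Pk (Suc k)"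
  have d1: "pt (dk k) = Pk (Suc k)" using F_d F k by simp
  have d2: "pt (dk (Suc k)) = Pk (Suc k)" using nF_d n k by simp
  have v1: "dk k \<in> gadV m u" "dk (Suc k) \<in> gadV m u" unfolding dk_def gadV_def using k by auto
  have m1: "dk k \<in> Pk (Suc k)" "dk (Suc k) \<in> Pk (Suc k)" using pt_ex v1 d1 d2 by auto
  have "lv (dk k) = lv (dk (Suc k))" using k by (simp add: lv_def dk_def)
  then have "dk k = dk (Suc k)" using L_all[OF _ m1] Pk[of "Suc k"] k by simp
  then show False by (simp add: dk_def)
qed

lemma nF_prop: "Suc k < m \<Longrightarrow> pt (ak k) \<noteq> Pk k \<Longrightarrow> pt (ak (Suc k)) \<noteq> Pk (Suc k)"
proof
  assume k: "Suc k < m" and n: "pt (ak k) \<noteq> Pk k" and F: "pt (ak (Suc k)) = Pk (Suc k)"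
  have "k < m" using k by simp
  then have d1: "pt (ak k) = Pk (Suc k)" using a_part n by blast
  have v1: "ak k \<in> gadV m u" "ak (Suc k) \<in> gadV m u" unfolding ak_def gadV_def using k by auto
  have m1: "ak k \<in> Pk (Suc k)" "ak (Suc k) \<in> Pk (Suc k)" using pt_ex v1 d1 F by auto
  have "lv (ak k) = lv (ak (Suc k))" using k by (simp add: lv_def ak_def)
  then have "ak k = ak (Suc k)" using L_all[OF _ m1] Pk[of "Suc k"] k by simp
  then show False by (simp add: ak_def)
qed

lemma all_F: "m = 0 \<or> pt (ak 0) = Pk 0 \<Longrightarrow> \<forall>k<m. pt (ak k) = Pk k"
proof (intro allI impI)
  fix k assume h: "m = 0 \<or> pt (ak 0) = Pk 0" and k: "k < m"
  then show "pt (ak k) = Pk k"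
  proof (induction k)
    case 0 then show ?case by auto
  next
    case (Suc k) then show ?case using F_prop by simp
  qed
qed

lemma all_nF: "pt (ak 0) \<noteq> Pk 0 \<Longrightarrow> \<forall>k<m. pt (ak k) \<noteq> Pk k"
proof (intro allI impI)
  fix k assume h: "pt (ak 0) \<noteq> Pk 0" and k: "k < m"
  then show "pt (ak k) \<noteq> Pk k"
  proof (induction k)
    case 0 then show ?case by auto
  next
    case (Suc k) then show ?case using nF_prop by simp
  qed
qed

end


context gp begin

lemma gadV_elem: "x \<in> gadV m u \<Longrightarrow> \<exists>r c. x = Gad u r c \<and> r \<le> m \<and> c \<le> m"
  unfolding gadV_def by blast

lemma Pk_same: "i \<le> m \<Longrightarrow> j \<le> m \<Longrightarrow> x \<in> Pk i \<Longrightarrow> x \<in> Pk j \<Longrightarrow> i = j"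
  using part_unique[OF part] Pk Pk_inj by metis

lemma rows_case:
  assumes F: "\<forall>k<m. pt (ak k) = Pk k"
  shows "\<sigma> = gadL m u"
proof -
  let ?Q = "quotient_arcs A \<sigma>"
  have step: "\<And>k. k < m \<Longrightarrow> (Pk k, Pk (Suc k)) \<in> ?Q" using arc_fwd1 F by blast
  have chain: "i < j \<Longrightarrow> j \<le> m \<Longrightarrow> (Pk i, Pk j) \<in> ?Q\<^sup>+" for i j
  proof (induction j)
    case 0 then show ?case by simp
  next
    case (Suc j)
    show ?case
    proof (cases "i = j")
      case True then show ?thesis using step Suc by auto
    next
      case False
      then have "(Pk i, Pk j) \<in> ?Q\<^sup>+" using Suc by simp
      moreover have "(Pk j, Pk (Suc j)) \<in> ?Q" using step Suc by simp
      ultimately show ?thesis by (rule trancl_into_trancl)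
    qed
  qed
  have mono: "j \<le> i" if "x \<in> Pk j" "y \<in> Pk i" "i \<le> m" "j \<le> m" "(x,y) \<in> gadE m u" for x y i j
  proof (rule ccontr)
    assume "\<not> j \<le> i"
    then have c: "(Pk i, Pk j) \<in> ?Q\<^sup>+" using chain that by simp
    have "Pk j \<noteq> Pk i"
    proof
      assume "Pk j = Pk i" then have "j = i" using Pk_inj that(3,4) by simp
      then show False using \<open>\<not> j \<le> i\<close> by simp
    qed
    then have "(Pk j, Pk i) \<in> ?Q"
      using qa[OF conjunct1[OF Pk[OF that(4)]] conjunct1[OF Pk[OF that(3)]] _ that(1) that(2) that(5)] by simp
    then have "(Pk j, Pk j) \<in> ?Q\<^sup>+" using c by (rule trancl_into_trancl2)
    then show False using acy unfolding acyclic_def by blast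
  qed
  have row_mono: "\<And>i. Gad u r c \<in> Pk j \<Longrightarrow> Gad u r c' \<in> Pk i \<Longrightarrow> r \<le> m \<Longrightarrow> c \<le> c' \<Longrightarrow> c' \<le> m
     \<Longrightarrow> i \<le> m \<Longrightarrow> j \<le> m \<Longrightarrow> j \<le> i" for r c c' j
  proof (induction c')
    case 0 then show ?case using Pk_same by (metis order_refl le_0_eq)
  next
    case (Suc c' i)
    show ?case
    proof (cases "c = Suc c'")
      case True then have "i = j" using Pk_same Suc.prems by metis
      then show ?thesis by simp
    next
      case False
      have v: "Gad u r c' \<in> gadV m u" using Suc.prems unfolding gadV_def by auto
      obtain l where l: "l \<le> m" "Gad u r c' \<in> Pk l" using in_some[OF v] by blast
      have "j \<le> l" using Suc.IH[OF Suc.prems(1) l(2)] Suc.prems l False by simp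
      moreover have "(Gad u r c', Gad u r (Suc c')) \<in> gadE m u" using Suc.prems by (intro gadE_right) auto
      then have "l \<le> i" using mono[OF l(2) Suc.prems(2) Suc.prems(6) l(1)] by simp
      ultimately show ?thesis by simp
    qed
  qed
  have Pk_row: "gi x = k" if k: "k \<le> m" and x: "x \<in> Pk k" for x k
  proof -
    have "x \<in> gadV m u" using sub Pk k x by blast
    then obtain r c where rc: "x = Gad u r c" "r \<le> m" "c \<le> m" using gadV_elem by blast
    have b: "Gad u k (m - k) \<in> Pk k" "Pk k \<in> \<sigma>" using Pk k by auto
    have br: "Gad u r (m - r) \<in> Pk r" using Pk rc by simp
    show ?thesis
    proof (cases "m \<le> r + c")
      case True
      then have "k \<le> r" using L_all[OF b(2) b(1) x] k rc by (simp add: lv_def)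
      moreover have "r \<le> k" using row_mono[OF br x[unfolded rc(1)]] rc k True by simp
      ultimately show ?thesis using rc by simp
    next
      case False
      then have "r \<le> k" using L_all[OF b(2) x b(1)] k rc by (simp add: lv_def)
      moreover have "k \<le> r" using row_mono[OF x[unfolded rc(1)] br] rc k False by simp
      ultimately show ?thesis using rc by simp
    qed
  qed
  have Pk_eq: "Pk k = {Gad u k j | j. j \<le> m}" if k: "k \<le> m" for k
  proof
    show "Pk k \<subseteq> {Gad u k j | j. j \<le> m}"
    proof
      fix x assume x: "x \<in> Pk k"
      then have "x \<in> gadV m u" using sub Pk k by blast
      then obtain r c where rc: "x = Gad u r c" "r \<le> m" "c \<le> m" using gadV_elem by blast
      then show "x \<in> {Gad u k j | j. j \<le> m}" using Pk_row[OF k x] by simp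
    qed
    show "{Gad u k j | j. j \<le> m} \<subseteq> Pk k"
    proof
      fix x assume "x \<in> {Gad u k j | j. j \<le> m}"
      then obtain j where j: "x = Gad u k j" "j \<le> m" by blast
      then have "x \<in> gadV m u" using k unfolding gadV_def by auto
      then obtain l where l: "l \<le> m" "x \<in> Pk l" using in_some by blast
      then have "l = k" using Pk_row[OF l] j by simp
      then show "x \<in> Pk k" using l by simp
    qed
  qed
  have e1: "Pk ` {..m} = (\<lambda>k. {Gad u k j | j. j \<le> m}) ` {..m}"
    by (rule image_cong[OF refl Pk_eq]) simp
  have e2: "gadL m u = (\<lambda>i. {Gad u i j |j. j \<le> m}) ` {..m}" unfolding gadL_def atMost_def by (rule setcompr_eq_image)
  show ?thesis by (rule trans[OF sigma_eq trans[OF e1 e2[symmetric]]])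
qed

lemma cols_case:
  assumes F: "\<forall>k<m. pt (ak k) \<noteq> Pk k"
  shows "\<sigma> = gadR m u"
proof -
  let ?Q = "quotient_arcs A \<sigma>"
  have step: "\<And>k. k < m \<Longrightarrow> (Pk (Suc k), Pk k) \<in> ?Q" using arc_bwd1 F a_part by blast
  have chain: "i < j \<Longrightarrow> j \<le> m \<Longrightarrow> (Pk j, Pk i) \<in> ?Q\<^sup>+" for i j
  proof (induction j)
    case 0 then show ?case by simp
  next
    case (Suc j)
    show ?case
    proof (cases "i = j")
      case True then show ?thesis using step Suc by auto
    next
      case False
      then have h: "(Pk j, Pk i) \<in> ?Q\<^sup>+" using Suc by simp
      have "(Pk (Suc j), Pk j) \<in> ?Q" using step Suc by simp
      then show ?thesis using h by (rule trancl_into_trancl2)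
    qed
  qed
  have mono: "i \<le> j" if "x \<in> Pk j" "y \<in> Pk i" "i \<le> m" "j \<le> m" "(x,y) \<in> gadE m u" for x y i j
  proof (rule ccontr)
    assume "\<not> i \<le> j"
    then have c: "(Pk i, Pk j) \<in> ?Q\<^sup>+" using chain that by simp
    have "Pk j \<noteq> Pk i"
    proof
      assume "Pk j = Pk i" then have "j = i" using Pk_inj that(3,4) by simp
      then show False using \<open>\<not> i \<le> j\<close> by simp
    qed
    then have "(Pk j, Pk i) \<in> ?Q"
      using qa[OF conjunct1[OF Pk[OF that(4)]] conjunct1[OF Pk[OF that(3)]] _ that(1) that(2) that(5)] by simp
    then have "(Pk j, Pk j) \<in> ?Q\<^sup>+" using c by (rule trancl_into_trancl2)
    then show False using acy unfolding acyclic_def by blast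
  qed
  have col_mono: "\<And>i. Gad u r c \<in> Pk j \<Longrightarrow> Gad u r' c \<in> Pk i \<Longrightarrow> c \<le> m \<Longrightarrow> r \<le> r' \<Longrightarrow> r' \<le> m
     \<Longrightarrow> i \<le> m \<Longrightarrow> j \<le> m \<Longrightarrow> i \<le> j" for r c r' j
  proof (induction r')
    case 0 then show ?case using Pk_same by (metis order_refl le_0_eq)
  next
    case (Suc r' i)
    show ?case
    proof (cases "r = Suc r'")
      case True then have "i = j" using Pk_same Suc.prems by metis
      then show ?thesis by simp
    next
      case False
      have v: "Gad u r' c \<in> gadV m u" using Suc.prems unfolding gadV_def by auto
      obtain l where l: "l \<le> m" "Gad u r' c \<in> Pk l" using in_some[OF v] by blast
      have "l \<le> j" using Suc.IH[OF Suc.prems(1) l(2)] Suc.prems l False by simp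
      moreover have "(Gad u r' c, Gad u (Suc r') c) \<in> gadE m u" using Suc.prems by (intro gadE_down) auto
      then have "i \<le> l" using mono[OF l(2) Suc.prems(2) Suc.prems(6) l(1)] by simp
      ultimately show ?thesis by simp
    qed
  qed
  have Pk_col: "gj x = m - k" if k: "k \<le> m" and x: "x \<in> Pk k" for x k
  proof -
    have "x \<in> gadV m u" using sub Pk k x by blast
    then obtain r c where rc: "x = Gad u r c" "r \<le> m" "c \<le> m" using gadV_elem by blast
    have b: "Gad u k (m - k) \<in> Pk k" "Pk k \<in> \<sigma>" using Pk k by auto
    have br: "Gad u (m - c) c \<in> Pk (m - c)" using Pk[of "m - c"] rc by simp
    show ?thesis
    proof (cases "m \<le> r + c")
      case True
      then have "m - k \<le> c" using L_all[OF b(2) b(1) x] k rc by (simp add: lv_def)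
      moreover have "k \<le> m - c" using col_mono[OF br x[unfolded rc(1)]] rc k True by simp
      ultimately show ?thesis using rc by simp
    next
      case False
      then have "c \<le> m - k" using L_all[OF b(2) x b(1)] k rc by (simp add: lv_def)
      moreover have "m - c \<le> k" using col_mono[OF x[unfolded rc(1)] br] rc k False by simp
      ultimately show ?thesis using rc by simp
    qed
  qed
  have Pk_eq: "Pk k = {Gad u j (m - k) | j. j \<le> m}" if k: "k \<le> m" for k
  proof
    show "Pk k \<subseteq> {Gad u j (m - k) | j. j \<le> m}"
    proof
      fix x assume x: "x \<in> Pk k"
      then have "x \<in> gadV m u" using sub Pk k by blast
      then obtain r c where rc: "x = Gad u r c" "r \<le> m" "c \<le> m" using gadV_elem by blast
      then show "x \<in> {Gad u j (m - k) | j. j \<le> m}" using Pk_col[OF k x] by simp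
    qed
    show "{Gad u j (m - k) | j. j \<le> m} \<subseteq> Pk k"
    proof
      fix x assume "x \<in> {Gad u j (m - k) | j. j \<le> m}"
      then obtain j where j: "x = Gad u j (m - k)" "j \<le> m" by blast
      then have "x \<in> gadV m u" using k unfolding gadV_def by auto
      then obtain l where l: "l \<le> m" "x \<in> Pk l" using in_some by blast
      then have "m - l = m - k" using Pk_col[OF l] j by simp
      then have "l = k" using l k by simp
      then show "x \<in> Pk k" using l by simp
    qed
  qed
  have e1: "Pk ` {..m} = (\<lambda>i. {Gad u j i | j. j \<le> m}) ` {..m}"
  proof -
    have "Pk ` {..m} = (\<lambda>k. {Gad u j (m - k) | j. j \<le> m}) ` {..m}"
      by (rule image_cong[OF refl Pk_eq]) simp
    also have "\<dots> = (\<lambda>i. {Gad u j i | j. j \<le> m}) ` ((\<lambda>k. m - k) ` {..m})" by (simp add: image_image)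
    also have "(\<lambda>k. m - k) ` {..m} = {..m}"
    proof
      show "(\<lambda>k. m - k) ` {..m} \<subseteq> {..m}" by auto
      show "{..m} \<subseteq> (\<lambda>k. m - k) ` {..m}"
      proof
        fix i assume "i \<in> {..m}" then have "i = m - (m - i)" "m - i \<in> {..m}" by auto
        then show "i \<in> (\<lambda>k. m - k) ` {..m}" by blast
      qed
    qed
    finally show ?thesis .
  qed
  have e2: "gadR m u = (\<lambda>i. {Gad u j i |j. j \<le> m}) ` {..m}" unfolding gadR_def atMost_def by (rule setcompr_eq_image)
  show ?thesis by (rule trans[OF sigma_eq trans[OF e1 e2[symmetric]]])
qed

lemma gridG: "\<sigma> = gadL m u \<or> \<sigma> = gadR m u"
proof (cases "m = 0 \<or> pt (ak 0) = Pk 0")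
  case True then show ?thesis using rows_case all_F by blast
next
  case False then show ?thesis using cols_case all_nF by blast
qed

end


lemma PA_noin: "(x, ArcV a) \<notin> PA V E e"
  unfolding PA_def gadE_def by auto

lemma PA_into_gad:
  assumes "(x, Gad v i j) \<in> PA V E e"
  shows "(\<exists>j'. x = Gad v i j' \<and> j = Suc j' \<and> v \<in> V \<and> i \<le> card E \<and> j' < card E)
       \<or> (\<exists>i'. x = Gad v i' j \<and> i = Suc i' \<and> v \<in> V \<and> i' < card E \<and> j \<le> card E)
       \<or> (\<exists>w. x = ArcV (v,w) \<and> (v,w) \<in> E \<and> e (v,w) = i \<and> j = 0)
       \<or> (\<exists>w. x = ArcV (w,v) \<and> (w,v) \<in> E \<and> i = 0 \<and> e (w,v) = j)"
  using assms unfolding PA_def gadE_def by auto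

lemma PA_noin2: "(x, y) \<in> PA V E e \<Longrightarrow> y \<notin> range ArcV"
  using PA_noin by blast

lemma PA_from_gad:
  assumes "(Gad v i j, y) \<in> PA V E e"
  shows "(Gad v i j, y) \<in> gadE (card E) v"
  using assms unfolding PA_def gadE_def by auto

lemma PA_from_arc:
  assumes "(ArcV a, y) \<in> PA V E e"
  shows "a \<in> E \<and> (y = Gad (fst a) (e a) 0 \<or> y = Gad (snd a) 0 (e a))"
  using assms unfolding PA_def gadE_def by auto

lemma gadE_sub_PA: "v \<in> V \<Longrightarrow> gadE (card E) v \<subseteq> PA V E e"
  unfolding PA_def by auto

lemma PV_gad: "Gad v i j \<in> PV V E \<longleftrightarrow> v \<in> V \<and> i \<le> card E \<and> j \<le> card E"
  unfolding PV_def gadV_def by auto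

lemma PV_arc: "ArcV a \<in> PV V E \<longleftrightarrow> a \<in> E"
  unfolding PV_def gadV_def by auto

lemma gadV_sub_PV: "v \<in> V \<Longrightarrow> gadV (card E) v \<subseteq> PV V E"
  unfolding PV_def by auto

lemma ham_minus_arcs:
  assumes h: "has_ham_path (PA V E e) P" and Y: "Y \<subseteq> range ArcV"
  shows "has_ham_path (PA V E e) (P - Y)"
proof -
  obtain xs where d: "distinct xs" and s: "set xs = P"
    and ar: "\<forall>k. Suc k < length xs \<longrightarrow> (xs ! k, xs ! Suc k) \<in> PA V E e"
    using h unfolding has_ham_path_def by blast
  show ?thesis
  proof (cases xs)
    case Nil then show ?thesis using h s by simp
  next
    case (Cons y ys)
    have nA: "\<forall>z\<in>set ys. z \<notin> Y"
    proof
      fix z assume "z \<in> set ys"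
      then obtain k where k: "k < length ys" "z = ys!k" by (metis in_set_conv_nth)
      then have "(xs!k, xs!Suc k) \<in> PA V E e" using ar Cons by simp
      then have "xs!Suc k \<notin> range ArcV" by (rule PA_noin2)
      then show "z \<notin> Y" using Y k Cons by auto
    qed
    show ?thesis
    proof (cases "y \<in> Y")
      case True
      have "P - Y = set ys" using s Cons nA True d by auto
      moreover have "distinct ys" using d Cons by simp
      moreover have "\<forall>k. Suc k < length ys \<longrightarrow> (ys ! k, ys ! Suc k) \<in> PA V E e"
        using ar Cons by (metis Suc_less_eq length_Cons nth_Cons_Suc)
      ultimately show ?thesis unfolding has_ham_path_def by blast
    next
      case False
      then have "P - Y = P" using s Cons nA by auto
      then show ?thesis using h by simp
    qed
  qed
qed

definition XU :: "('v \<times> 'v) set \<Rightarrow> 'v \<Rightarrow> 'v pvert set" where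
  "XU E u = gadV (card E) u \<union> ArcV ` {a\<in>E. fst a = u \<or> snd a = u}"

lemma part_in_X:
  assumes h: "has_ham_path (PA V E e) P" and PV: "P \<subseteq> PV V E"
    and meet: "P \<inter> gadV (card E) u \<noteq> {}"
  shows "P \<subseteq> XU E u"
proof -
  let ?G = "gadV (card E) u"
  obtain xs where d: "distinct xs" and s: "set xs = P"
    and ar: "\<forall>k. Suc k < length xs \<longrightarrow> (xs ! k, xs ! Suc k) \<in> PA V E e"
    using h unfolding has_ham_path_def by blast
  have notarc: "\<And>k. 0 < k \<Longrightarrow> k < length xs \<Longrightarrow> xs!k \<notin> range ArcV"
  proof -
    fix k assume k: "0 < k" "k < length xs"
    then obtain k' where kk: "k = Suc k'" by (cases k) auto
    then have "Suc k' < length xs" using k by simp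
    then have "(xs!k', xs!Suc k') \<in> PA V E e" using ar by blast
    then have "xs!Suc k' \<notin> range ArcV" by (rule PA_noin2)
    then show "xs!k \<notin> range ArcV" using kk by simp
  qed
  have fwd: "xs!Suc k \<in> ?G" if k: "Suc k < length xs" "xs!k \<in> ?G" for k
  proof -
    obtain i j where ij: "xs!k = Gad u i j" using k(2) unfolding gadV_def by blast
    have "(xs!k, xs!Suc k) \<in> gadE (card E) u" using PA_from_gad ar k ij by metis
    then show ?thesis using gadE_step[of "xs!k" "xs!Suc k" "card E" u] unfolding gadV_def by auto
  qed
  have bwd: "xs!k \<in> ?G" if k: "Suc k < length xs" "0 < k" "xs!Suc k \<in> ?G" for k
  proof -
    obtain i j where ij: "xs!Suc k = Gad u i j" using k(3) unfolding gadV_def by blast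
    have na: "xs!k \<notin> range ArcV" using notarc k by simp
    then obtain v i' j' where v: "xs!k = Gad v i' j'" by (cases "xs!k") auto
    have "(xs!k, xs!Suc k) \<in> gadE (card E) v" using PA_from_gad ar k v by metis
    then have "v = u" using ij v unfolding gadE_def by auto
    moreover have "xs!k \<in> PV V E" using PV s k nth_mem by (metis Suc_lessD subsetD)
    ultimately show ?thesis using v PV_gad[of u i' j' V E] unfolding gadV_def by auto
  qed
  have same: "xs!k \<in> ?G \<longleftrightarrow> xs!1 \<in> ?G" if k: "1 \<le> k" "k < length xs" for k
    using k
  proof (induction k)
    case 0 then show ?case by simp
  next
    case (Suc k)
    show ?case
    proof (cases "k = 0")
      case True then show ?thesis by simp
    next
      case False
      then have IH: "xs!k \<in> ?G \<longleftrightarrow> xs!1 \<in> ?G" using Suc by simp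
      have sk: "Suc k < length xs" "0 < k" using Suc.prems False by auto
      have "xs!k \<in> ?G \<longleftrightarrow> xs!Suc k \<in> ?G"
      proof
        assume "xs!k \<in> ?G" then show "xs!Suc k \<in> ?G" by (rule fwd[OF sk(1)])
      next
        assume "xs!Suc k \<in> ?G" then show "xs!k \<in> ?G" by (rule bwd[OF sk])
      qed
      then show ?thesis using IH by simp
    qed
  qed
  obtain x0 where "x0 \<in> P" "x0 \<in> ?G" using meet by blast
  then obtain p where p: "p < length xs" "xs!p \<in> ?G" using s by (metis in_set_conv_nth)
  have all1: "\<forall>k. 1 \<le> k \<longrightarrow> k < length xs \<longrightarrow> xs!k \<in> ?G"
  proof (cases "p = 0")
    case True
    show ?thesis
    proof (intro allI impI)
      fix k assume k: "1 \<le> k" "k < length xs"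
      then have "Suc 0 < length xs" by simp
      then have "xs!1 \<in> ?G" using fwd[of 0] True p by simp
      then show "xs!k \<in> ?G" using same[OF k] by simp
    qed
  next
    case False
    then have "1 \<le> p" by simp
    then have "xs!1 \<in> ?G" using same[of p] p by simp
    then show ?thesis using same by simp
  qed
  have x0: "xs!0 \<in> XU E u" if "0 < length xs"
  proof (cases "p = 0")
    case True then show ?thesis using p unfolding XU_def by simp
  next
    case False
    then have l: "1 < length xs" and g1: "xs!1 \<in> ?G" using p all1 by auto
    show ?thesis
    proof (cases "xs!0")
      case (Gad v i j)
      then have "(xs!0, xs!1) \<in> gadE (card E) v" using PA_from_gad ar l by (metis One_nat_def)
      then have "v = u" using g1 Gad unfolding gadE_def gadV_def by auto
      moreover have "xs!0 \<in> PV V E" using PV s that by (metis nth_mem subsetD)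
      ultimately show ?thesis using Gad PV_gad[of u i j V E] unfolding XU_def gadV_def by auto
    next
      case (ArcV a)
      then have "a \<in> E \<and> (xs!1 = Gad (fst a) (e a) 0 \<or> xs!1 = Gad (snd a) 0 (e a))"
        using PA_from_arc ar l by (metis One_nat_def)
      then have "a \<in> E" "fst a = u \<or> snd a = u" using g1 unfolding gadV_def by auto
      then show ?thesis using ArcV unfolding XU_def by auto
    qed
  qed
  show ?thesis
  proof
    fix x assume "x \<in> P"
    then obtain k where k: "k < length xs" "x = xs!k" using s by (metis in_set_conv_nth)
    show "x \<in> XU E u"
    proof (cases "k = 0")
      case True then show ?thesis using x0 k by simp
    next
      case False then show ?thesis using all1 k unfolding XU_def by simp
    qed
  qed
qed


lemma std_finite:
  assumes "std_graph V E e" shows "finite (PV V E)" "finite E"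
proof -
  have fV: "finite V" and EV: "E \<subseteq> V \<times> V" using assms unfolding std_graph_def by auto
  then show fE: "finite E" using finite_subset by blast
  show "finite (PV V E)" unfolding PV_def using fV fE finite_gadV by auto
qed

lemma restr_partition:
  assumes uV: "u \<in> V" and part: "partition_on (PV V E) \<pi>"
  shows "partition_on (gadV (card E) u) (restr_gad (card E) \<pi> u)"
proof -
  have "partition_on (gadV (card E) u \<inter> PV V E) ((\<inter>) (gadV (card E) u) ` \<pi> - {{}})"
    by (rule partition_on_restrict[OF part])
  moreover have "gadV (card E) u \<inter> PV V E = gadV (card E) u" using gadV_sub_PV[OF uV] by blast
  moreover have "(\<inter>) (gadV (card E) u) ` \<pi> - {{}} = restr_gad (card E) \<pi> u"
    unfolding restr_gad_def by blast
  ultimately show ?thesis by simp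
qed

lemma count_lemma:
  assumes std: "std_graph V E e" and uV: "u \<in> V"
    and Hp: "H_star_partition (PV V E) (PA V E e) \<pi>"
    and nwo: "\<not> well_oriented (card E) \<pi> u"
  shows "card E + 2 \<le> card {P\<in>\<pi>. P \<subseteq> XU E u}"
proof -
  define m where "m = card E"
  define G where "G = gadV m u"
  define \<sigma> where "\<sigma> = restr_gad m \<pi> u"
  have part: "partition_on (PV V E) \<pi>" and hams: "\<forall>P\<in>\<pi>. has_ham_path (PA V E e) P"
    and acy: "acyclic (quotient_arcs (PA V E e) \<pi>)"
    using Hp unfolding H_star_partition_def by auto
  have fin: "finite \<pi>" using finite_elements[OF std_finite(1)[OF std] part] .
  have PsubPV: "\<And>P. P \<in> \<pi> \<Longrightarrow> P \<subseteq> PV V E" using partition_onD1[OF part] by blast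
  have meetX: "\<And>P. P \<in> \<pi> \<Longrightarrow> P \<inter> G \<noteq> {} \<Longrightarrow> P \<subseteq> XU E u"
  proof -
    fix P assume a: "P \<in> \<pi>" "P \<inter> G \<noteq> {}"
    have h: "has_ham_path (PA V E e) P" using hams a(1) by blast
    show "P \<subseteq> XU E u" using part_in_X[OF h PsubPV[OF a(1)]] a(2) unfolding G_def m_def by simp
  qed
  have c1: "card \<sigma> \<le> card {P\<in>\<pi>. P \<subseteq> XU E u}"
  proof -
    have "\<sigma> = (\<lambda>P. P \<inter> G) ` {P\<in>\<pi>. P \<inter> G \<noteq> {}}" unfolding \<sigma>_def restr_gad_def G_def by blast
    then have "card \<sigma> \<le> card {P\<in>\<pi>. P \<inter> G \<noteq> {}}" using fin by (simp add: card_image_le)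
    also have "\<dots> \<le> card {P\<in>\<pi>. P \<subseteq> XU E u}" using fin meetX by (intro card_mono) auto
    finally show ?thesis .
  qed
  have "\<not> card \<sigma> \<le> Suc m"
  proof
    assume cle: "card \<sigma> \<le> Suc m"
    have gpi: "gp m u \<sigma> (PA V E e)"
    proof
      show "partition_on (gadV m u) \<sigma>" unfolding \<sigma>_def m_def by (rule restr_partition[OF uV part])
      show "card \<sigma> \<le> Suc m" by (rule cle)
      show "\<forall>Q\<in>\<sigma>. has_ham_path (PA V E e) Q"
      proof
        fix Q assume "Q \<in> \<sigma>"
        then obtain P where P: "P \<in> \<pi>" "Q = P \<inter> G" "P \<inter> G \<noteq> {}"
          unfolding \<sigma>_def restr_gad_def G_def by blast
        have "P \<subseteq> XU E u" using meetX P by blast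
        then have "Q = P - range ArcV" using P unfolding XU_def G_def m_def gadV_def by blast
        then show "has_ham_path (PA V E e) Q" using ham_minus_arcs hams P by blast
      qed
      show "\<forall>x\<in>gadV m u. \<forall>y\<in>gadV m u. ((x, y) \<in> PA V E e) = ((x, y) \<in> gadE m u)"
      proof (intro ballI iffI)
        fix x y assume "x \<in> gadV m u" "(x,y) \<in> PA V E e"
        then obtain i j where "x = Gad u i j" unfolding gadV_def by blast
        then show "(x,y) \<in> gadE m u" using PA_from_gad[of u i j y V E e] \<open>(x,y) \<in> PA V E e\<close> unfolding m_def by simp
      next
        fix x y assume "(x,y) \<in> gadE m u"
        then show "(x,y) \<in> PA V E e" using gadE_sub_PA[OF uV] unfolding m_def by blast
      qed
      define f where "f Q = (SOME P. P \<in> \<pi> \<and> Q = P \<inter> G)" for Q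
      have f: "\<And>Q. Q \<in> \<sigma> \<Longrightarrow> f Q \<in> \<pi> \<and> Q = f Q \<inter> G"
      proof -
        fix Q assume "Q \<in> \<sigma>"
        then have "\<exists>P. P \<in> \<pi> \<and> Q = P \<inter> G" unfolding \<sigma>_def restr_gad_def G_def by blast
        then show "f Q \<in> \<pi> \<and> Q = f Q \<inter> G" unfolding f_def by (rule someI_ex)
      qed
      show "acyclic (quotient_arcs (PA V E e) \<sigma>)"
      proof (rule acyclic_map[OF _ acy, of _ f])
        fix Q1 Q2 assume a: "(Q1,Q2) \<in> quotient_arcs (PA V E e) \<sigma>"
        then have q: "Q1 \<in> \<sigma>" "Q2 \<in> \<sigma>" "Q1 \<noteq> Q2" "\<exists>x\<in>Q1. \<exists>y\<in>Q2. (x,y) \<in> PA V E e"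
          unfolding quotient_arcs_def by auto
        have "f Q1 \<noteq> f Q2" using f q by metis
        then show "(f Q1, f Q2) \<in> quotient_arcs (PA V E e) \<pi>"
          unfolding quotient_arcs_def using f[OF q(1)] f[OF q(2)] q(4) by blast
      qed
    qed
    have "\<sigma> = gadL m u \<or> \<sigma> = gadR m u" by (rule gp.gridG[OF gpi])
    then show False using nwo unfolding well_oriented_def \<sigma>_def m_def by blast
  qed
  then show ?thesis using c1 unfolding m_def by simp
qed


lemma generic:
  fixes W Z :: "nat \<Rightarrow> 'v pvert set"
  assumes std: "std_graph V E e" and uV: "u \<in> V"
    and Hp: "H_star_partition (PV V E) (PA V E e) \<pi>"
    and nwo: "\<not> well_oriented (card E) \<pi> u"
    and Xeq: "XU E u = insert s (\<Union>i\<le>card E. W i)"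
    and sG: "s \<notin> gadV (card E) u"
    and sW: "\<forall>i\<le>card E. s \<notin> W i" and Wne: "\<forall>i\<le>card E. W i \<noteq> {}"
    and Wdisj: "\<forall>i\<le>card E. \<forall>j\<le>card E. i \<noteq> j \<longrightarrow> W i \<inter> W j = {}"
    and Wham: "\<forall>i\<le>card E. has_ham_path (PA V E e) (W i)"
    and inW: "\<forall>i\<le>card E. \<forall>x y. (x,y)\<in>PA V E e \<longrightarrow> y \<in> W i \<longrightarrow> x \<notin> W i \<longrightarrow> x = s \<or> (\<exists>j<i. x \<in> W j)"
    and WZ: "\<forall>i\<le>card E. W i \<inter> gadV (card E) u = Z i" and Zne: "\<forall>i\<le>card E. Z i \<noteq> {}"
  shows "\<exists>\<pi>'. H_star_partition (PV V E) (PA V E e) \<pi>' \<and> card \<pi>' \<le> card \<pi>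
     \<and> restr_gad (card E) \<pi>' u = Z ` {..card E}
     \<and> (\<forall>w. w \<noteq> u \<longrightarrow> restr_gad (card E) \<pi>' w = restr_gad (card E) \<pi> w)"
proof -
  define m where "m = card E"
  define X where "X = XU E u"
  define G where "G = gadV m u"
  have part: "partition_on (PV V E) \<pi>" and hams: "\<forall>P\<in>\<pi>. has_ham_path (PA V E e) P"
    using Hp unfolding H_star_partition_def by auto
  have fin: "finite \<pi>" using finite_elements[OF std_finite(1)[OF std] part] .
  have PsubPV: "\<And>P. P \<in> \<pi> \<Longrightarrow> P \<subseteq> PV V E" using partition_onD1[OF part] by blast
  have EV: "E \<subseteq> V \<times> V" using std unfolding std_graph_def by simp
  have XV: "X \<subseteq> PV V E"
  proof -
    have "gadV (card E) u \<subseteq> PV V E" by (rule gadV_sub_PV[OF uV])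
    moreover have "ArcV ` {a\<in>E. fst a = u \<or> snd a = u} \<subseteq> PV V E" using PV_arc by blast
    ultimately show ?thesis unfolding X_def XU_def by blast
  qed
  have GX: "G \<subseteq> X" unfolding G_def X_def XU_def m_def by blast
  have PX: "\<forall>P\<in>\<pi>. P - X \<noteq> {} \<longrightarrow> has_ham_path (PA V E e) (P - X)"
  proof (intro ballI impI)
    fix P assume P: "P \<in> \<pi>" "P - X \<noteq> {}"
    have h: "has_ham_path (PA V E e) P" using hams P by blast
    show "has_ham_path (PA V E e) (P - X)"
    proof (cases "P \<inter> G = {}")
      case True
      then have "P - X = P - ArcV ` {a\<in>E. fst a = u \<or> snd a = u}" unfolding X_def XU_def G_def m_def by blast
      moreover have "ArcV ` {a\<in>E. fst a = u \<or> snd a = u} \<subseteq> range ArcV" by blast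
      ultimately show ?thesis using ham_minus_arcs[OF h] by simp
    next
      case False
      then have "P \<subseteq> X" using part_in_X[OF h PsubPV[OF P(1)]] unfolding X_def G_def m_def by blast
      then show ?thesis using P by blast
    qed
  qed
  have cnt: "m + 2 \<le> card {P\<in>\<pi>. P \<subseteq> X}"
    using count_lemma[OF std uV Hp nwo] unfolding m_def X_def by simp
  define \<pi>' where "\<pi>' = {P - X | P. P\<in>\<pi> \<and> P - X \<noteq> {}} \<union> W ` {..m} \<union> {{s}}"
  have sA: "s \<in> range ArcV"
  proof -
    have "s \<in> XU E u" using Xeq by blast
    then show ?thesis using sG unfolding XU_def by blast
  qed
  have nos: "\<forall>x. (x, s) \<notin> PA V E e" using PA_noin2 sA by blast
  have c: "H_star_partition (PV V E) (PA V E e) \<pi>' \<and> card \<pi>' \<le> card \<pi>"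
    unfolding \<pi>'_def m_def
    by (rule construct[OF Hp fin XV Xeq[folded X_def] _ _ _ _ nos _ PX cnt[unfolded m_def]])
      (fact sW | fact Wne | fact Wdisj | fact Wham | fact inW)+
  have sX: "s \<in> X" unfolding X_def using Xeq by blast
  have WX: "\<And>i. i \<le> m \<Longrightarrow> W i \<subseteq> X" unfolding X_def m_def using Xeq by blast
  have ru: "restr_gad m \<pi>' u = Z ` {..m}"
  proof
    show "restr_gad m \<pi>' u \<subseteq> Z ` {..m}"
    proof
      fix R assume "R \<in> restr_gad m \<pi>' u"
      then obtain Q where Q: "Q \<in> \<pi>'" "R = Q \<inter> G" "Q \<inter> G \<noteq> {}" unfolding restr_gad_def G_def by blast
      then consider (a) "\<exists>P. Q = P - X" | (b) "\<exists>i\<le>m. Q = W i" | (c) "Q = {s}" unfolding \<pi>'_def by blast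
      then show "R \<in> Z ` {..m}"
      proof cases
        case a then show ?thesis using Q GX by blast
      next
        case b then obtain i where "i \<le> m" "Q = W i" by blast
        then show ?thesis using Q WZ unfolding G_def m_def by auto
      next
        case c then show ?thesis using Q sG unfolding G_def m_def by auto
      qed
    qed
    show "Z ` {..m} \<subseteq> restr_gad m \<pi>' u"
    proof
      fix R assume "R \<in> Z ` {..m}"
      then obtain i where i: "i \<le> m" "R = Z i" by blast
      then have "R = W i \<inter> G" "W i \<in> \<pi>'" "W i \<inter> G \<noteq> {}" using WZ Zne unfolding G_def m_def \<pi>'_def by auto
      then show "R \<in> restr_gad m \<pi>' u" unfolding restr_gad_def G_def by blast
    qed
  qed
  have rw: "restr_gad m \<pi>' w = restr_gad m \<pi> w" if wu: "w \<noteq> u" for w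
  proof -
    define Gw where "Gw = gadV m w"
    have XGw: "X \<inter> Gw = {}" unfolding X_def XU_def Gw_def gadV_def m_def using wu by auto
    show ?thesis
    proof
      show "restr_gad m \<pi>' w \<subseteq> restr_gad m \<pi> w"
      proof
        fix R assume "R \<in> restr_gad m \<pi>' w"
        then obtain Q where Q: "Q \<in> \<pi>'" "R = Q \<inter> Gw" "Q \<inter> Gw \<noteq> {}" unfolding restr_gad_def Gw_def by blast
        then consider (a) "\<exists>P. P \<in> \<pi> \<and> Q = P - X" | (b) "\<exists>i\<le>m. Q = W i" | (c) "Q = {s}" unfolding \<pi>'_def by blast
        then show "R \<in> restr_gad m \<pi> w"
        proof cases
          case a then obtain P where P: "P \<in> \<pi>" "Q = P - X" by blast
          then have "R = P \<inter> Gw" "P \<inter> Gw \<noteq> {}" using Q XGw by auto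
          then show ?thesis using P unfolding restr_gad_def Gw_def by blast
        next
          case b then obtain i where "i \<le> m" "Q = W i" by blast
          then show ?thesis using Q WX XGw by blast
        next
          case c then show ?thesis using Q sX XGw by blast
        qed
      qed
      show "restr_gad m \<pi> w \<subseteq> restr_gad m \<pi>' w"
      proof
        fix R assume "R \<in> restr_gad m \<pi> w"
        then obtain P where P: "P \<in> \<pi>" "R = P \<inter> Gw" "P \<inter> Gw \<noteq> {}" unfolding restr_gad_def Gw_def by blast
        then have "R = (P - X) \<inter> Gw" "P - X \<noteq> {}" "(P - X) \<inter> Gw \<noteq> {}" using XGw by auto
        moreover have "P - X \<in> \<pi>'" using P \<open>P - X \<noteq> {}\<close> unfolding \<pi>'_def by blast
        ultimately show "R \<in> restr_gad m \<pi>' w" unfolding restr_gad_def Gw_def by blast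
      qed
    qed
  qed
  show ?thesis using c ru rw unfolding m_def by blast
qed


lemma gadV_Gad[simp]: "Gad v i j \<in> gadV m u \<longleftrightarrow> v = u \<and> i \<le> m \<and> j \<le> m"
  unfolding gadV_def by auto
lemma gadV_Arc[simp]: "ArcV a \<notin> gadV m u"
  unfolding gadV_def by auto

definition hpl :: "('a \<times> 'a) set \<Rightarrow> 'a list \<Rightarrow> bool" where
  "hpl A xs \<longleftrightarrow> distinct xs \<and> (\<forall>k. Suc k < length xs \<longrightarrow> (xs ! k, xs ! Suc k) \<in> A)"

lemma hpl_ham: "hpl A xs \<Longrightarrow> has_ham_path A (set xs)"
  unfolding hpl_def has_ham_path_def by blast

lemma hpl_cons:
  assumes "hpl A ys" "a \<notin> set ys" "ys \<noteq> []" "(a, ys!0) \<in> A"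
  shows "hpl A (a # ys)"
  unfolding hpl_def
proof (intro conjI allI impI)
  show "distinct (a # ys)" using assms unfolding hpl_def by simp
  fix k assume k: "Suc k < length (a # ys)"
  show "((a # ys) ! k, (a # ys) ! Suc k) \<in> A"
  proof (cases k)
    case 0 then show ?thesis using assms by simp
  next
    case (Suc k') then show ?thesis using assms k unfolding hpl_def by simp
  qed
qed

lemma hpl_row:
  assumes uV: "u \<in> V" and i: "i \<le> card E"
  shows "hpl (PA V E e) (map (\<lambda>j. Gad u i j) [0..<Suc (card E)])"
  unfolding hpl_def
proof (intro conjI allI impI)
  show "distinct (map (\<lambda>j. Gad u i j) [0..<Suc (card E)])"
    by (simp add: distinct_map inj_on_def del: upt_Suc)
  fix k assume k: "Suc k < length (map (\<lambda>j. Gad u i j) [0..<Suc (card E)])"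
  then have "k < card E" by simp
  then have "(Gad u i k, Gad u i (Suc k)) \<in> gadE (card E) u" using i by (intro gadE_right) auto
  then have "(Gad u i k, Gad u i (Suc k)) \<in> PA V E e" using gadE_sub_PA[OF uV] by blast
  then show "(map (\<lambda>j. Gad u i j) [0..<Suc (card E)] ! k, map (\<lambda>j. Gad u i j) [0..<Suc (card E)] ! Suc k) \<in> PA V E e"
    using k by (simp del: upt_Suc)
qed

lemma hpl_col:
  assumes uV: "u \<in> V" and i: "i \<le> card E"
  shows "hpl (PA V E e) (map (\<lambda>j. Gad u j i) [0..<Suc (card E)])"
  unfolding hpl_def
proof (intro conjI allI impI)
  show "distinct (map (\<lambda>j. Gad u j i) [0..<Suc (card E)])"
    by (simp add: distinct_map inj_on_def del: upt_Suc)
  fix k assume k: "Suc k < length (map (\<lambda>j. Gad u j i) [0..<Suc (card E)])"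
  then have "k < card E" by simp
  then have "(Gad u k i, Gad u (Suc k) i) \<in> gadE (card E) u" using i by (intro gadE_down) auto
  then have "(Gad u k i, Gad u (Suc k) i) \<in> PA V E e" using gadE_sub_PA[OF uV] by blast
  then show "(map (\<lambda>j. Gad u j i) [0..<Suc (card E)] ! k, map (\<lambda>j. Gad u j i) [0..<Suc (card E)] ! Suc k) \<in> PA V E e"
    using k by (simp del: upt_Suc)
qed

lemma set_row: "set (map (\<lambda>j. Gad u i j) [0..<Suc m]) = {Gad u i j | j. j \<le> m}"
  by auto
lemma set_col: "set (map (\<lambda>j. Gad u j i) [0..<Suc m]) = {Gad u j i | j. j \<le> m}"
  by auto


theorem lemma5p8:
  fixes V :: "'v set" and E :: "('v \<times> 'v) set" and e :: "('v \<times> 'v) \<Rightarrow> nat"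
    and u :: 'v and \<pi> :: "'v pvert set set"
  assumes "std_graph V E e"
    and "u \<in> V"
    and "H_star_partition (PV V E) (PA V E e) \<pi>"
    and "\<not> well_oriented (card E) \<pi> u"
  shows "\<exists>\<pi>'. H_star_partition (PV V E) (PA V E e) \<pi>' \<and> card \<pi>' \<le> card \<pi>
           \<and> well_oriented (card E) \<pi>' u
           \<and> (\<forall>w\<in>V. w \<noteq> u \<longrightarrow> (well_oriented (card E) \<pi> w \<longleftrightarrow> well_oriented (card E) \<pi>' w))"
proof -
  note std = assms(1) and uV = assms(2) and Hp = assms(3) and nwo = assms(4)
  define m where "m = card E"
  have noloop: "\<And>v. (v,v) \<notin> E" and deg: "card {w. (w, u) \<in> E} = 1 \<or> card {w. (u, w) \<in> E} = 1"
    and bij: "bij_betw e E {1..card E}"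
    using std uV unfolding std_graph_def by auto
  have erange: "\<And>a. a \<in> E \<Longrightarrow> e a \<le> m" using bij_betw_apply[OF bij] unfolding m_def by fastforce
  have einj: "\<And>a b. a \<in> E \<Longrightarrow> b \<in> E \<Longrightarrow> e a = e b \<Longrightarrow> a = b"
    using bij_betw_imp_inj_on[OF bij] by (meson inj_onD)
  have finish: "\<exists>\<pi>'. H_star_partition (PV V E) (PA V E e) \<pi>' \<and> card \<pi>' \<le> card \<pi>
           \<and> well_oriented (card E) \<pi>' u
           \<and> (\<forall>w\<in>V. w \<noteq> u \<longrightarrow> (well_oriented (card E) \<pi> w \<longleftrightarrow> well_oriented (card E) \<pi>' w))"
    if ex: "\<exists>\<pi>'. H_star_partition (PV V E) (PA V E e) \<pi>' \<and> card \<pi>' \<le> card \<pi>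
     \<and> restr_gad (card E) \<pi>' u = Z ` {..card E}
     \<and> (\<forall>w. w \<noteq> u \<longrightarrow> restr_gad (card E) \<pi>' w = restr_gad (card E) \<pi> w)"
    and Zw: "Z ` {..card E} = gadL (card E) u \<or> Z ` {..card E} = gadR (card E) u" for Z
  proof -
    from ex obtain \<pi>' where p: "H_star_partition (PV V E) (PA V E e) \<pi>'" "card \<pi>' \<le> card \<pi>"
      "restr_gad (card E) \<pi>' u = Z ` {..card E}"
      "\<forall>w. w \<noteq> u \<longrightarrow> restr_gad (card E) \<pi>' w = restr_gad (card E) \<pi> w" by blast
    have "well_oriented (card E) \<pi>' u" unfolding well_oriented_def using p(3) Zw by simp
    moreover have "\<forall>w\<in>V. w \<noteq> u \<longrightarrow> (well_oriented (card E) \<pi> w \<longleftrightarrow> well_oriented (card E) \<pi>' w)"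
      unfolding well_oriented_def using p(4) by simp
    ultimately show ?thesis using p(1,2) by blast
  qed
  show ?thesis
  proof (cases "card {w. (w, u) \<in> E} = 1")
    case True
    then obtain v0 where inset: "{w. (w, u) \<in> E} = {v0}" by (rule card_1_singletonE)
    then have v0E: "(v0, u) \<in> E" by blast
    have inv: "\<And>w. (w,u) \<in> E \<Longrightarrow> w = v0" using inset by blast
    define s where "s = ArcV (v0, u)"
    define Z where "Z i = {Gad u i j | j. j \<le> m}" for i
    define W where "W i = Z i \<union> {ArcV (u,w) | w. (u,w) \<in> E \<and> e (u,w) = i}" for i
    have Wmem: "\<And>i x. x \<in> W i \<longleftrightarrow> (\<exists>j. x = Gad u i j \<and> j \<le> m) \<or> (\<exists>w. x = ArcV (u,w) \<and> (u,w) \<in> E \<and> e (u,w) = i)"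
      unfolding W_def Z_def by blast
    have Xeq: "XU E u = insert s (\<Union>i\<le>card E. W i)"
    proof
      show "XU E u \<subseteq> insert s (\<Union>i\<le>card E. W i)"
      proof
        fix x assume x: "x \<in> XU E u"
        show "x \<in> insert s (\<Union>i\<le>card E. W i)"
        proof (cases x)
          case (Gad v i j)
          then have "v = u" "i \<le> m" "j \<le> m" using x unfolding XU_def m_def by auto
          then have "x \<in> W i" using Gad Wmem by blast
          then show ?thesis using \<open>i \<le> m\<close> unfolding m_def by blast
        next
          case (ArcV a)
          then have a: "a \<in> E" "fst a = u \<or> snd a = u" using x unfolding XU_def by auto
          obtain a1 a2 where aa: "a = (a1, a2)" by (cases a)
          show ?thesis
          proof (cases "a2 = u")
            case True
            then have "a1 = v0" using inv a aa by blast
            then show ?thesis using ArcV aa True s_def by simp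
          next
            case False
            then have "a1 = u" using a aa by simp
            then have "x \<in> W (e a)" using Wmem ArcV aa a by blast
            then show ?thesis using erange[OF a(1)] unfolding m_def by blast
          qed
        qed
      qed
      show "insert s (\<Union>i\<le>card E. W i) \<subseteq> XU E u"
      proof
        fix x assume "x \<in> insert s (\<Union>i\<le>card E. W i)"
        then consider (s) "x = s" | (w) i where "i \<le> m" "x \<in> W i" unfolding m_def by blast
        then show "x \<in> XU E u"
        proof cases
          case s then show ?thesis using v0E unfolding s_def XU_def by auto
        next
          case w then show ?thesis using Wmem[of x i] unfolding XU_def m_def by auto
        qed
      qed
    qed
    have sG: "s \<notin> gadV (card E) u" unfolding s_def by simp
    have sW: "\<forall>i\<le>card E. s \<notin> W i"
    proof (intro allI impI)
      fix i assume "i \<le> card E"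
      show "s \<notin> W i"
      proof
        assume "s \<in> W i"
        then obtain w where "ArcV (v0,u) = ArcV (u,w)" "(u,w) \<in> E" using Wmem unfolding s_def by blast
        then show False using noloop by simp
      qed
    qed
    have Wne: "\<forall>i\<le>card E. W i \<noteq> {}" using Wmem by blast
    have Zne: "\<forall>i\<le>card E. Z i \<noteq> {}" unfolding Z_def by blast
    have WZ: "\<forall>i\<le>card E. W i \<inter> gadV (card E) u = Z i" unfolding W_def Z_def m_def by auto
    have Wdisj: "\<forall>i\<le>card E. \<forall>j\<le>card E. i \<noteq> j \<longrightarrow> W i \<inter> W j = {}"
    proof (intro allI impI)
      fix i j assume "i \<le> card E" "j \<le> card E" "i \<noteq> j"
      show "W i \<inter> W j = {}"
      proof (rule ccontr)
        assume "W i \<inter> W j \<noteq> {}"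
        then obtain x where "x \<in> W i" "x \<in> W j" by blast
        then show False using Wmem[of x i] Wmem[of x j] \<open>i \<noteq> j\<close> by auto
      qed
    qed
    have Wham: "\<forall>i\<le>card E. has_ham_path (PA V E e) (W i)"
    proof (intro allI impI)
      fix i assume i: "i \<le> card E"
      let ?r = "map (\<lambda>j. Gad u i j) [0..<Suc (card E)]"
      have hr: "hpl (PA V E e) ?r" by (rule hpl_row[OF uV i])
      show "has_ham_path (PA V E e) (W i)"
      proof (cases "\<exists>w. (u,w) \<in> E \<and> e (u,w) = i")
        case True
        then obtain w where w: "(u,w) \<in> E" "e (u,w) = i" by blast
        have "W i = set (ArcV (u,w) # ?r)"
        proof -
          have "{ArcV (u,w') | w'. (u,w') \<in> E \<and> e (u,w') = i} = {ArcV (u,w)}"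
            using w einj by blast
          then show ?thesis unfolding W_def Z_def m_def set_row by auto
        qed
        moreover have "hpl (PA V E e) (ArcV (u,w) # ?r)"
        proof (rule hpl_cons[OF hr])
          show "ArcV (u,w) \<notin> set ?r" by auto
          show "?r \<noteq> []" by simp
          have "(ArcV (u,w), Gad u (e (u,w)) 0) \<in> PA V E e" unfolding PA_def using w by blast
          then show "(ArcV (u,w), ?r ! 0) \<in> PA V E e" using w by (simp del: upt_Suc)
        qed
        ultimately show ?thesis using hpl_ham by metis
      next
        case False
        then have "W i = set ?r" unfolding W_def Z_def m_def set_row by auto
        then show ?thesis using hpl_ham[OF hr] by simp
      qed
    qed
    have inW: "\<forall>i\<le>card E. \<forall>x y. (x,y)\<in>PA V E e \<longrightarrow> y \<in> W i \<longrightarrow> x \<notin> W i \<longrightarrow> x = s \<or> (\<exists>j<i. x \<in> W j)"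
    proof (intro allI impI)
      fix i x y assume i: "i \<le> card E" and xy: "(x,y) \<in> PA V E e" and y: "y \<in> W i" and x: "x \<notin> W i"
      have "y \<notin> range ArcV" using PA_noin2[OF xy] .
      then obtain j where j: "y = Gad u i j" "j \<le> m" using y Wmem by blast
      from PA_into_gad[OF xy[unfolded j(1)]]
      consider (r) j' where "x = Gad u i j'" "j = Suc j'" "j' < card E"
        | (d) i' where "x = Gad u i' j" "i = Suc i'" "i' < card E"
        | (o) w where "x = ArcV (u,w)" "(u,w) \<in> E" "e (u,w) = i"
        | (n) w where "x = ArcV (w,u)" "(w,u) \<in> E"
        by blast
      then show "x = s \<or> (\<exists>j<i. x \<in> W j)"
      proof cases
        case r then have "x \<in> W i" using Wmem unfolding m_def by auto
        then show ?thesis using x by simp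
      next
        case d then have "x \<in> W i'" using Wmem j unfolding m_def by auto
        then show ?thesis using d by auto
      next
        case o then have "x \<in> W i" using Wmem by blast
        then show ?thesis using x by simp
      next
        case n then show ?thesis using inv s_def by simp
      qed
    qed
    have ex: "\<exists>\<pi>'. H_star_partition (PV V E) (PA V E e) \<pi>' \<and> card \<pi>' \<le> card \<pi>
     \<and> restr_gad (card E) \<pi>' u = Z ` {..card E}
     \<and> (\<forall>w. w \<noteq> u \<longrightarrow> restr_gad (card E) \<pi>' w = restr_gad (card E) \<pi> w)"
      by (rule generic[OF std uV Hp nwo Xeq sG sW Wne Wdisj Wham inW WZ Zne])
    have "Z ` {..card E} = gadL (card E) u"
      unfolding gadL_def Z_def m_def atMost_def by (rule setcompr_eq_image[symmetric])
    then show ?thesis using finish[OF ex] by blast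
  next
    case False
    then have "card {w. (u, w) \<in> E} = 1" using deg by simp
    then obtain w0 where outset: "{w. (u, w) \<in> E} = {w0}" by (rule card_1_singletonE)
    then have w0E: "(u, w0) \<in> E" by blast
    have outv: "\<And>w. (u,w) \<in> E \<Longrightarrow> w = w0" using outset by blast
    define s where "s = ArcV (u, w0)"
    define Z where "Z i = {Gad u j i | j. j \<le> m}" for i
    define W where "W i = Z i \<union> {ArcV (v,u) | v. (v,u) \<in> E \<and> e (v,u) = i}" for i
    have Wmem: "\<And>i x. x \<in> W i \<longleftrightarrow> (\<exists>j. x = Gad u j i \<and> j \<le> m) \<or> (\<exists>v. x = ArcV (v,u) \<and> (v,u) \<in> E \<and> e (v,u) = i)"
      unfolding W_def Z_def by blast
    have Xeq: "XU E u = insert s (\<Union>i\<le>card E. W i)"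
    proof
      show "XU E u \<subseteq> insert s (\<Union>i\<le>card E. W i)"
      proof
        fix x assume x: "x \<in> XU E u"
        show "x \<in> insert s (\<Union>i\<le>card E. W i)"
        proof (cases x)
          case (Gad v j i)
          then have "v = u" "i \<le> m" "j \<le> m" using x unfolding XU_def m_def by auto
          then have "x \<in> W i" using Gad Wmem by blast
          then show ?thesis using \<open>i \<le> m\<close> unfolding m_def by blast
        next
          case (ArcV a)
          then have a: "a \<in> E" "fst a = u \<or> snd a = u" using x unfolding XU_def by auto
          obtain a1 a2 where aa: "a = (a1, a2)" by (cases a)
          show ?thesis
          proof (cases "a1 = u")
            case True
            then have "a2 = w0" using outv a aa by blast
            then show ?thesis using ArcV aa True s_def by simp
          next
            case False
            then have "a2 = u" using a aa by simp
            then have "x \<in> W (e a)" using Wmem ArcV aa a by blast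
            then show ?thesis using erange[OF a(1)] unfolding m_def by blast
          qed
        qed
      qed
      show "insert s (\<Union>i\<le>card E. W i) \<subseteq> XU E u"
      proof
        fix x assume "x \<in> insert s (\<Union>i\<le>card E. W i)"
        then consider (s) "x = s" | (w) i where "i \<le> m" "x \<in> W i" unfolding m_def by blast
        then show "x \<in> XU E u"
        proof cases
          case s then show ?thesis using w0E unfolding s_def XU_def by auto
        next
          case w then show ?thesis using Wmem[of x i] unfolding XU_def m_def by auto
        qed
      qed
    qed
    have sG: "s \<notin> gadV (card E) u" unfolding s_def by simp
    have sW: "\<forall>i\<le>card E. s \<notin> W i"
    proof (intro allI impI)
      fix i assume "i \<le> card E"
      show "s \<notin> W i"
      proof
        assume "s \<in> W i"
        then obtain v where "ArcV (u,w0) = ArcV (v,u)" "(v,u) \<in> E" using Wmem unfolding s_def by blast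
        then show False using noloop by simp
      qed
    qed
    have Wne: "\<forall>i\<le>card E. W i \<noteq> {}" using Wmem by blast
    have Zne: "\<forall>i\<le>card E. Z i \<noteq> {}" unfolding Z_def by blast
    have WZ: "\<forall>i\<le>card E. W i \<inter> gadV (card E) u = Z i" unfolding W_def Z_def m_def by auto
    have Wdisj: "\<forall>i\<le>card E. \<forall>j\<le>card E. i \<noteq> j \<longrightarrow> W i \<inter> W j = {}"
    proof (intro allI impI)
      fix i j assume "i \<le> card E" "j \<le> card E" "i \<noteq> j"
      show "W i \<inter> W j = {}"
      proof (rule ccontr)
        assume "W i \<inter> W j \<noteq> {}"
        then obtain x where "x \<in> W i" "x \<in> W j" by blast
        then show False using Wmem[of x i] Wmem[of x j] \<open>i \<noteq> j\<close> by auto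
      qed
    qed
    have Wham: "\<forall>i\<le>card E. has_ham_path (PA V E e) (W i)"
    proof (intro allI impI)
      fix i assume i: "i \<le> card E"
      let ?r = "map (\<lambda>j. Gad u j i) [0..<Suc (card E)]"
      have hr: "hpl (PA V E e) ?r" by (rule hpl_col[OF uV i])
      show "has_ham_path (PA V E e) (W i)"
      proof (cases "\<exists>v. (v,u) \<in> E \<and> e (v,u) = i")
        case True
        then obtain v where v: "(v,u) \<in> E" "e (v,u) = i" by blast
        have "W i = set (ArcV (v,u) # ?r)"
        proof -
          have "{ArcV (v',u) | v'. (v',u) \<in> E \<and> e (v',u) = i} = {ArcV (v,u)}"
            using v einj by blast
          then show ?thesis unfolding W_def Z_def m_def set_col by auto
        qed
        moreover have "hpl (PA V E e) (ArcV (v,u) # ?r)"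
        proof (rule hpl_cons[OF hr])
          show "ArcV (v,u) \<notin> set ?r" by auto
          show "?r \<noteq> []" by simp
          have "(ArcV (v,u), Gad u 0 (e (v,u))) \<in> PA V E e" unfolding PA_def using v by blast
          then show "(ArcV (v,u), ?r ! 0) \<in> PA V E e" using v by (simp del: upt_Suc)
        qed
        ultimately show ?thesis using hpl_ham by metis
      next
        case False
        then have "W i = set ?r" unfolding W_def Z_def m_def set_col by auto
        then show ?thesis using hpl_ham[OF hr] by simp
      qed
    qed
    have inW: "\<forall>i\<le>card E. \<forall>x y. (x,y)\<in>PA V E e \<longrightarrow> y \<in> W i \<longrightarrow> x \<notin> W i \<longrightarrow> x = s \<or> (\<exists>j<i. x \<in> W j)"
    proof (intro allI impI)
      fix i x y assume i: "i \<le> card E" and xy: "(x,y) \<in> PA V E e" and y: "y \<in> W i" and x: "x \<notin> W i"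
      have "y \<notin> range ArcV" using PA_noin2[OF xy] .
      then obtain j where j: "y = Gad u j i" "j \<le> m" using y Wmem by blast
      from PA_into_gad[OF xy[unfolded j(1)]]
      consider (r) i' where "x = Gad u j i'" "i = Suc i'" "i' < card E"
        | (d) j' where "x = Gad u j' i" "j = Suc j'" "j' < card E"
        | (o) w where "x = ArcV (u,w)" "(u,w) \<in> E"
        | (n) v where "x = ArcV (v,u)" "(v,u) \<in> E" "e (v,u) = i"
        by blast
      then show "x = s \<or> (\<exists>j<i. x \<in> W j)"
      proof cases
        case r then have "x \<in> W i'" using Wmem j unfolding m_def by auto
        then show ?thesis using r by auto
      next
        case d then have "x \<in> W i" using Wmem i unfolding m_def by auto
        then show ?thesis using x by simp
      next
        case o then show ?thesis using outv s_def by simp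
      next
        case n then have "x \<in> W i" using Wmem by blast
        then show ?thesis using x by simp
      qed
    qed
    have ex: "\<exists>\<pi>'. H_star_partition (PV V E) (PA V E e) \<pi>' \<and> card \<pi>' \<le> card \<pi>
     \<and> restr_gad (card E) \<pi>' u = Z ` {..card E}
     \<and> (\<forall>w. w \<noteq> u \<longrightarrow> restr_gad (card E) \<pi>' w = restr_gad (card E) \<pi> w)"
      by (rule generic[OF std uV Hp nwo Xeq sG sW Wne Wdisj Wham inW WZ Zne])
    have "Z ` {..card E} = gadR (card E) u"
      unfolding gadR_def Z_def m_def atMost_def by (rule setcompr_eq_image[symmetric])
    then show ?thesis using finish[OF ex] by blast
  qed
qed


end
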